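(* Let $R$ be a ring and $M$ a bounded below complex of finitely presented left $R$-modules. Then every flat complex belongs to $\underline{\mathfrak{Pr}}^{-1}_{\mathscr{C}(R)}(M)$.
   Context: Complexes are homologically indexed; a complex $M$ is bounded below if there is $b$ with $M_n=0$ for all $n\le b$. A flat complex is an exact complex all of whose cycles $Z_n=\mathrm{Ker}\,d_n$ are flat modules (equivalently, a flat object of the category $\mathscr{C}(R)$ of complexes). $\underline{\mathfrak{Pr}}^{-1}_{\mathscr{C}(R)}(M)$ is the class of complexes $N$ such that every morphism of complexes $M\to N$ factors through a projective complex. *)

theory Defs
  imports "HOL-Algebra.Module" "HOL-Algebra.FiniteProduct"
begin

text \<open>HOL-Algebra's locale module requires a commutative ring, so we use its
record type and its axioms predicate module_axioms, but only require ring R.\<close>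

definition left_module :: "'r ring \<Rightarrow> ('r, 'm) module \<Rightarrow> bool" where
  "left_module R M \<longleftrightarrow> ring R \<and> abelian_group M \<and> module_axioms R M"

definition lin_hom :: "'r ring \<Rightarrow> ('r, 'm) module \<Rightarrow> ('r, 'n) module \<Rightarrow> ('m \<Rightarrow> 'n) set" where
  "lin_hom R M N = {h. (\<forall>x\<in>carrier M. h x \<in> carrier N)
      \<and> (\<forall>x\<in>carrier M. \<forall>y\<in>carrier M. h (x \<oplus>\<^bsub>M\<^esub> y) = h x \<oplus>\<^bsub>N\<^esub> h y)
      \<and> (\<forall>a\<in>carrier R. \<forall>x\<in>carrier M. h (a \<odot>\<^bsub>M\<^esub> x) = a \<odot>\<^bsub>N\<^esub> h x)}"

text \<open>M is finitely presented: there are generators x_0..x_{n-1} (so R^n \<rightarrow> M is onto)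
and finitely many relations r_0..r_{k-1} in R^n generating the kernel of R^n \<rightarrow> M,
i.e. an exact sequence R^k \<rightarrow> R^n \<rightarrow> M \<rightarrow> 0. Elements of R^n are lists of length n.\<close>

definition lincomb :: "('r, 'm) module \<Rightarrow> 'r list \<Rightarrow> 'm list \<Rightarrow> 'm" where
  "lincomb M rs xs = finsum M (\<lambda>i. rs ! i \<odot>\<^bsub>M\<^esub> xs ! i) {..<length xs}"

definition tuples :: "'r ring \<Rightarrow> nat \<Rightarrow> 'r list set" where
  "tuples R n = {rs. length rs = n \<and> set rs \<subseteq> carrier R}"

definition fin_presented :: "'r ring \<Rightarrow> ('r, 'm) module \<Rightarrow> bool" where
  "fin_presented R M \<longleftrightarrow>
    (\<exists>xs :: 'm list. set xs \<subseteq> carrier M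
      \<and> (\<forall>x\<in>carrier M. \<exists>rs\<in>tuples R (length xs). x = lincomb M rs xs)
      \<and> (\<exists>rels :: 'r list list. set rels \<subseteq> tuples R (length xs)
          \<and> (\<forall>rs\<in>tuples R (length xs).
               lincomb M rs xs = \<zero>\<^bsub>M\<^esub> \<longleftrightarrow>
               (\<exists>cs\<in>tuples R (length rels).
                  \<forall>i<length xs. rs ! i = finsum R (\<lambda>j. cs ! j \<otimes>\<^bsub>R\<^esub> (rels ! j ! i)) {..<length rels}))))"

definition right_ideal :: "'r ring \<Rightarrow> 'r set \<Rightarrow> bool" where
  "right_ideal R I \<longleftrightarrow> subgroup I (add_monoid R)
     \<and> (\<forall>a\<in>I. \<forall>r\<in>carrier R. a \<otimes>\<^bsub>R\<^esub> r \<in> I)"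

definition delta :: "'c \<Rightarrow> 'c \<Rightarrow> int" where
  "delta p = (\<lambda>q. if q = p then 1 else 0)"

text \<open>For S a right ideal of R (or S = R), the tensor product S \<otimes>_R F is the free abelian
group on S \<times> F (finitely supported functions S \<times> F \<Rightarrow> int) modulo the subgroup
generated by the balanced-bilinearity relations. tensor_rel R F S is that subgroup;
a formal sum represents 0 in S \<otimes>_R F iff it lies in tensor_rel R F S.\<close>

inductive_set tensor_rel :: "'r ring \<Rightarrow> ('r, 'm) module \<Rightarrow> 'r set \<Rightarrow> ('r \<times> 'm \<Rightarrow> int) set"
  for R F S where
  zero: "(\<lambda>_. 0) \<in> tensor_rel R F S"
| diff: "u \<in> tensor_rel R F S \<Longrightarrow> v \<in> tensor_rel R F S \<Longrightarrow> (\<lambda>p. u p - v p) \<in> tensor_rel R F S"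
| rel_l: "a \<in> S \<Longrightarrow> a' \<in> S \<Longrightarrow> x \<in> carrier F \<Longrightarrow>
     (\<lambda>p. delta (a \<oplus>\<^bsub>R\<^esub> a', x) p - delta (a, x) p - delta (a', x) p) \<in> tensor_rel R F S"
| rel_r: "a \<in> S \<Longrightarrow> x \<in> carrier F \<Longrightarrow> x' \<in> carrier F \<Longrightarrow>
     (\<lambda>p. delta (a, x \<oplus>\<^bsub>F\<^esub> x') p - delta (a, x) p - delta (a, x') p) \<in> tensor_rel R F S"
| rel_bal: "a \<in> S \<Longrightarrow> r \<in> carrier R \<Longrightarrow> x \<in> carrier F \<Longrightarrow>
     (\<lambda>p. delta (a \<otimes>\<^bsub>R\<^esub> r, x) p - delta (a, r \<odot>\<^bsub>F\<^esub> x) p) \<in> tensor_rel R F S"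

text \<open>A left module F is flat iff for every right ideal I the induced map
I \<otimes>_R F \<rightarrow> R \<otimes>_R F is injective (ideal criterion for flatness).\<close>

definition flat_module :: "'r ring \<Rightarrow> ('r, 'm) module \<Rightarrow> bool" where
  "flat_module R F \<longleftrightarrow> left_module R F \<and>
    (\<forall>I. right_ideal R I \<longrightarrow>
       (\<forall>u :: 'r \<times> 'm \<Rightarrow> int. finite {p. u p \<noteq> 0} \<and> {p. u p \<noteq> 0} \<subseteq> I \<times> carrier F
          \<longrightarrow> u \<in> tensor_rel R F (carrier R) \<longrightarrow> u \<in> tensor_rel R F I))"

definition is_complex :: "'r ring \<Rightarrow> (int \<Rightarrow> ('r, 'm) module) \<Rightarrow> (int \<Rightarrow> 'm \<Rightarrow> 'm) \<Rightarrow> bool" where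
  "is_complex R C d \<longleftrightarrow> (\<forall>n. left_module R (C n))
     \<and> (\<forall>n. d n \<in> lin_hom R (C n) (C (n - 1)))
     \<and> (\<forall>n. \<forall>x\<in>carrier (C n). d (n - 1) (d n x) = \<zero>\<^bsub>C (n - 2)\<^esub>)"

definition cx_morphism :: "'r ring \<Rightarrow> (int \<Rightarrow> ('r, 'm) module) \<Rightarrow> (int \<Rightarrow> 'm \<Rightarrow> 'm)
     \<Rightarrow> (int \<Rightarrow> ('r, 'n) module) \<Rightarrow> (int \<Rightarrow> 'n \<Rightarrow> 'n) \<Rightarrow> (int \<Rightarrow> 'm \<Rightarrow> 'n) \<Rightarrow> bool" where
  "cx_morphism R C dC D dD f \<longleftrightarrow>
     (\<forall>n. f n \<in> lin_hom R (C n) (D n)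
        \<and> (\<forall>x\<in>carrier (C n). dD n (f n x) = f (n - 1) (dC n x)))"

definition bounded_below :: "(int \<Rightarrow> ('r, 'm) module) \<Rightarrow> bool" where
  "bounded_below C \<longleftrightarrow> (\<exists>b::int. \<forall>n\<le>b. carrier (C n) = {\<zero>\<^bsub>C n\<^esub>})"

definition cycles :: "(int \<Rightarrow> ('r, 'm) module) \<Rightarrow> (int \<Rightarrow> 'm \<Rightarrow> 'm) \<Rightarrow> int \<Rightarrow> ('r, 'm) module" where
  "cycles C d n = (C n)\<lparr>carrier := {x \<in> carrier (C n). d n x = \<zero>\<^bsub>C (n - 1)\<^esub>}\<rparr>"

definition exact_complex :: "'r ring \<Rightarrow> (int \<Rightarrow> ('r, 'm) module) \<Rightarrow> (int \<Rightarrow> 'm \<Rightarrow> 'm) \<Rightarrow> bool" where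
  "exact_complex R C d \<longleftrightarrow> is_complex R C d
     \<and> (\<forall>n. carrier (cycles C d n) = d (n + 1) ` carrier (C (n + 1)))"

definition flat_complex :: "'r ring \<Rightarrow> (int \<Rightarrow> ('r, 'm) module) \<Rightarrow> (int \<Rightarrow> 'm \<Rightarrow> 'm) \<Rightarrow> bool" where
  "flat_complex R C d \<longleftrightarrow> exact_complex R C d \<and> (\<forall>n. flat_module R (cycles C d n))"

text \<open>Since HOL cannot quantify over types inside a
formula, the lifting property is required for target complexes Y of the same element
type as P and source complexes X of element type (bool \<times> 'p) \<Rightarrow> 'r, which is big
enough to contain the canonical free (disc) cover of P; hence this is equivalent to
projectivity in C(R).\<close>

definition projective_complex :: "'r ring \<Rightarrow> (int \<Rightarrow> ('r, 'p) module) \<Rightarrow> (int \<Rightarrow> 'p \<Rightarrow> 'p) \<Rightarrow> bool" where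
  "projective_complex R P dP \<longleftrightarrow> is_complex R P dP \<and>
    (\<forall>(X :: int \<Rightarrow> ('r, bool \<times> 'p \<Rightarrow> 'r) module) dX (Y :: int \<Rightarrow> ('r, 'p) module) dY g h.
       is_complex R X dX \<and> is_complex R Y dY \<and> cx_morphism R X dX Y dY g
       \<and> (\<forall>n. g n ` carrier (X n) = carrier (Y n))
       \<and> cx_morphism R P dP Y dY h
       \<longrightarrow> (\<exists>k. cx_morphism R P dP X dX k \<and> (\<forall>n. \<forall>x\<in>carrier (P n). g n (k n x) = h n x)))"

text \<open>The projective complex is taken with element type (bool \<times> 'n) \<Rightarrow> 'r, which contains
the canonical projective (disc) cover of N; any factorisation through some projective
complex yields one through that cover.\<close>

definition in_Pr_inv :: "'r ring \<Rightarrow> (int \<Rightarrow> ('r, 'm) module) \<Rightarrow> (int \<Rightarrow> 'm \<Rightarrow> 'm)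
     \<Rightarrow> (int \<Rightarrow> ('r, 'n) module) \<Rightarrow> (int \<Rightarrow> 'n \<Rightarrow> 'n) \<Rightarrow> bool" where
  "in_Pr_inv R M dM N dN \<longleftrightarrow> is_complex R N dN \<and>
    (\<forall>f. cx_morphism R M dM N dN f \<longrightarrow>
       (\<exists>(P :: int \<Rightarrow> ('r, bool \<times> 'n \<Rightarrow> 'r) module) dP g h.
          projective_complex R P dP \<and> cx_morphism R M dM P dP g \<and> cx_morphism R P dP N dN h
          \<and> (\<forall>n. \<forall>x\<in>carrier (M n). h n (g n x) = f n x)))"

end

theory Submission
  imports Defs
begin

locale lmod = R?: ring + M?: abelian_group M for M (structure) +
  assumes smult_closed [simp, intro]:
      "\<lbrakk>a \<in> carrier R; x \<in> carrier M\<rbrakk> \<Longrightarrow> a \<odot>\<^bsub>M\<^esub> x \<in> carrier M"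
    and smult_l_distr:
      "\<lbrakk>a \<in> carrier R; b \<in> carrier R; x \<in> carrier M\<rbrakk> \<Longrightarrow>
      (a \<oplus> b) \<odot>\<^bsub>M\<^esub> x = a \<odot>\<^bsub>M\<^esub> x \<oplus>\<^bsub>M\<^esub> b \<odot>\<^bsub>M\<^esub> x"
    and smult_r_distr:
      "\<lbrakk>a \<in> carrier R; x \<in> carrier M; y \<in> carrier M\<rbrakk> \<Longrightarrow>
      a \<odot>\<^bsub>M\<^esub> (x \<oplus>\<^bsub>M\<^esub> y) = a \<odot>\<^bsub>M\<^esub> x \<oplus>\<^bsub>M\<^esub> a \<odot>\<^bsub>M\<^esub> y"
    and smult_assoc1:
      "\<lbrakk>a \<in> carrier R; b \<in> carrier R; x \<in> carrier M\<rbrakk> \<Longrightarrow>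
      (a \<otimes> b) \<odot>\<^bsub>M\<^esub> x = a \<odot>\<^bsub>M\<^esub> (b \<odot>\<^bsub>M\<^esub> x)"
    and smult_one [simp]:
      "x \<in> carrier M \<Longrightarrow> \<one> \<odot>\<^bsub>M\<^esub> x = x"

lemma left_module_lmod: "left_module R M \<Longrightarrow> lmod R M"
  unfolding left_module_def module_axioms_def
  by (intro lmod.intro lmod_axioms.intro) (auto simp: ring_def abelian_group_def)

lemma lmod_left_module: "lmod R M \<Longrightarrow> left_module R M"
  unfolding left_module_def module_axioms_def lmod_def lmod_axioms_def
  by auto

context lmod begin

lemma smult_zero_l [simp]: "x \<in> carrier M \<Longrightarrow> \<zero> \<odot>\<^bsub>M\<^esub> x = \<zero>\<^bsub>M\<^esub>"
proof -
  assume x: "x \<in> carrier M"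
  have "\<zero> \<odot>\<^bsub>M\<^esub> x \<oplus>\<^bsub>M\<^esub> \<zero> \<odot>\<^bsub>M\<^esub> x = (\<zero> \<oplus> \<zero>) \<odot>\<^bsub>M\<^esub> x"
    using x by (metis R.zero_closed smult_l_distr)
  also have "\<dots> = \<zero> \<odot>\<^bsub>M\<^esub> x" using x by simp
  finally have "\<zero> \<odot>\<^bsub>M\<^esub> x \<oplus>\<^bsub>M\<^esub> \<zero> \<odot>\<^bsub>M\<^esub> x = \<zero> \<odot>\<^bsub>M\<^esub> x" .
  then show ?thesis using x M.add.l_cancel_one[of "\<zero> \<odot>\<^bsub>M\<^esub> x" "\<zero> \<odot>\<^bsub>M\<^esub> x"] by simp
qed

lemma smult_zero_r [simp]: "a \<in> carrier R \<Longrightarrow> a \<odot>\<^bsub>M\<^esub> \<zero>\<^bsub>M\<^esub> = \<zero>\<^bsub>M\<^esub>"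
proof -
  assume a: "a \<in> carrier R"
  have "a \<odot>\<^bsub>M\<^esub> \<zero>\<^bsub>M\<^esub> \<oplus>\<^bsub>M\<^esub> a \<odot>\<^bsub>M\<^esub> \<zero>\<^bsub>M\<^esub> = a \<odot>\<^bsub>M\<^esub> (\<zero>\<^bsub>M\<^esub> \<oplus>\<^bsub>M\<^esub> \<zero>\<^bsub>M\<^esub>)"
    using a by (metis M.zero_closed smult_r_distr)
  also have "\<dots> = a \<odot>\<^bsub>M\<^esub> \<zero>\<^bsub>M\<^esub>" using a by simp
  finally have "a \<odot>\<^bsub>M\<^esub> \<zero>\<^bsub>M\<^esub> \<oplus>\<^bsub>M\<^esub> a \<odot>\<^bsub>M\<^esub> \<zero>\<^bsub>M\<^esub> = a \<odot>\<^bsub>M\<^esub> \<zero>\<^bsub>M\<^esub>" .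
  then show ?thesis using a M.add.l_cancel_one[of "a \<odot>\<^bsub>M\<^esub> \<zero>\<^bsub>M\<^esub>" "a \<odot>\<^bsub>M\<^esub> \<zero>\<^bsub>M\<^esub>"] by simp
qed

lemma smult_minus_l: "\<lbrakk>a \<in> carrier R; x \<in> carrier M\<rbrakk> \<Longrightarrow> (\<ominus> a) \<odot>\<^bsub>M\<^esub> x = \<ominus>\<^bsub>M\<^esub> (a \<odot>\<^bsub>M\<^esub> x)"
proof -
  assume a: "a \<in> carrier R" and x: "x \<in> carrier M"
  have "(\<ominus> a) \<odot>\<^bsub>M\<^esub> x \<oplus>\<^bsub>M\<^esub> a \<odot>\<^bsub>M\<^esub> x = \<zero>\<^bsub>M\<^esub>"
    using a x by (simp add: smult_l_distr[symmetric] R.l_neg)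
  then show ?thesis using a x by (simp add: M.minus_equality)
qed

lemma smult_minus_r: "\<lbrakk>a \<in> carrier R; x \<in> carrier M\<rbrakk> \<Longrightarrow> a \<odot>\<^bsub>M\<^esub> (\<ominus>\<^bsub>M\<^esub> x) = \<ominus>\<^bsub>M\<^esub> (a \<odot>\<^bsub>M\<^esub> x)"
proof -
  assume a: "a \<in> carrier R" and x: "x \<in> carrier M"
  have "a \<odot>\<^bsub>M\<^esub> (\<ominus>\<^bsub>M\<^esub> x) \<oplus>\<^bsub>M\<^esub> a \<odot>\<^bsub>M\<^esub> x = \<zero>\<^bsub>M\<^esub>"
    using a x by (simp add: smult_r_distr[symmetric] M.l_neg)
  then show ?thesis using a x by (simp add: M.minus_equality)
qed

lemma smult_diff_l: "\<lbrakk>a \<in> carrier R; b \<in> carrier R; x \<in> carrier M\<rbrakk> \<Longrightarrow>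
   (a \<ominus> b) \<odot>\<^bsub>M\<^esub> x = a \<odot>\<^bsub>M\<^esub> x \<ominus>\<^bsub>M\<^esub> b \<odot>\<^bsub>M\<^esub> x"
  by (simp add: R.minus_eq M.minus_eq smult_l_distr smult_minus_l)

lemma smult_diff_r: "\<lbrakk>a \<in> carrier R; x \<in> carrier M; y \<in> carrier M\<rbrakk> \<Longrightarrow>
   a \<odot>\<^bsub>M\<^esub> (x \<ominus>\<^bsub>M\<^esub> y) = a \<odot>\<^bsub>M\<^esub> x \<ominus>\<^bsub>M\<^esub> a \<odot>\<^bsub>M\<^esub> y"
  by (simp add: M.minus_eq smult_r_distr smult_minus_r)

lemma smult_finsum_r:
  assumes a: "a \<in> carrier R" and f: "f \<in> A \<rightarrow> carrier M"
  shows "a \<odot>\<^bsub>M\<^esub> finsum M f A = finsum M (\<lambda>i. a \<odot>\<^bsub>M\<^esub> f i) A"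
  using f
proof (induct A rule: infinite_finite_induct)
  case (insert i A)
  then show ?case using a by (simp add: smult_r_distr Pi_def)
qed (use a in auto)

lemma smult_finsum_l:
  assumes x: "x \<in> carrier M" and f: "f \<in> A \<rightarrow> carrier R"
  shows "finsum R f A \<odot>\<^bsub>M\<^esub> x = finsum M (\<lambda>i. f i \<odot>\<^bsub>M\<^esub> x) A"
  using f
proof (induct A rule: infinite_finite_induct)
  case (insert i A)
  then show ?case using x by (simp add: smult_l_distr Pi_def)
qed (use x in auto)

end

lemma lin_homD:
  assumes "h \<in> lin_hom R M N"
  shows "\<And>x. x \<in> carrier M \<Longrightarrow> h x \<in> carrier N"
    and "\<And>x y. x \<in> carrier M \<Longrightarrow> y \<in> carrier M \<Longrightarrow> h (x \<oplus>\<^bsub>M\<^esub> y) = h x \<oplus>\<^bsub>N\<^esub> h y"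
    and "\<And>a x. a \<in> carrier R \<Longrightarrow> x \<in> carrier M \<Longrightarrow> h (a \<odot>\<^bsub>M\<^esub> x) = a \<odot>\<^bsub>N\<^esub> h x"
  using assms unfolding lin_hom_def by auto

lemma lin_homI:
  assumes "\<And>x. x \<in> carrier M \<Longrightarrow> h x \<in> carrier N"
    and "\<And>x y. x \<in> carrier M \<Longrightarrow> y \<in> carrier M \<Longrightarrow> h (x \<oplus>\<^bsub>M\<^esub> y) = h x \<oplus>\<^bsub>N\<^esub> h y"
    and "\<And>a x. a \<in> carrier R \<Longrightarrow> x \<in> carrier M \<Longrightarrow> h (a \<odot>\<^bsub>M\<^esub> x) = a \<odot>\<^bsub>N\<^esub> h x"
  shows "h \<in> lin_hom R M N"
  using assms unfolding lin_hom_def by auto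

lemma lin_hom_zero:
  assumes M: "lmod R M" and N: "lmod R N" and h: "h \<in> lin_hom R M N"
  shows "h \<zero>\<^bsub>M\<^esub> = \<zero>\<^bsub>N\<^esub>"
proof -
  interpret M: lmod R M by fact
  interpret N: lmod R N by fact
  have "h \<zero>\<^bsub>M\<^esub> \<oplus>\<^bsub>N\<^esub> h \<zero>\<^bsub>M\<^esub> = h \<zero>\<^bsub>M\<^esub>"
    using lin_homD[OF h] by (metis M.l_zero M.zero_closed)
  then show ?thesis using lin_homD(1)[OF h] M.zero_closed
    by (simp add: N.add.l_cancel_one)
qed

lemma lin_hom_minus:
  assumes M: "lmod R M" and N: "lmod R N" and h: "h \<in> lin_hom R M N" and x: "x \<in> carrier M"
  shows "h (\<ominus>\<^bsub>M\<^esub> x) = \<ominus>\<^bsub>N\<^esub> h x"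
proof -
  interpret M: lmod R M by fact
  interpret N: lmod R N by fact
  have "h (\<ominus>\<^bsub>M\<^esub> x) \<oplus>\<^bsub>N\<^esub> h x = \<zero>\<^bsub>N\<^esub>"
    using lin_homD(2)[OF h, of "\<ominus>\<^bsub>M\<^esub> x" x] x lin_hom_zero[OF M N h] by (simp add: M.l_neg)
  then show ?thesis using x lin_homD(1)[OF h] by (simp add: N.minus_equality)
qed

lemma lin_hom_diff:
  assumes M: "lmod R M" and N: "lmod R N" and h: "h \<in> lin_hom R M N"
    and x: "x \<in> carrier M" and y: "y \<in> carrier M"
  shows "h (x \<ominus>\<^bsub>M\<^esub> y) = h x \<ominus>\<^bsub>N\<^esub> h y"
proof -
  interpret M: lmod R M by fact
  interpret N: lmod R N by fact
  show ?thesis using x y lin_homD[OF h] lin_hom_minus[OF M N h]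
    by (simp add: M.minus_eq N.minus_eq)
qed

lemma lin_hom_finsum:
  assumes M: "lmod R M" and N: "lmod R N" and h: "h \<in> lin_hom R M N"
    and f: "f \<in> A \<rightarrow> carrier M"
  shows "h (finsum M f A) = finsum N (\<lambda>i. h (f i)) A"
proof -
  interpret M: lmod R M by fact
  interpret N: lmod R N by fact
  show ?thesis using f
  proof (induct A rule: infinite_finite_induct)
    case (infinite A)
    then show ?case using lin_hom_zero[OF M N h] by simp
  next
    case empty
    then show ?case using lin_hom_zero[OF M N h] by simp
  next
    case (insert i A)
    then have "f i \<in> carrier M" "f \<in> A \<rightarrow> carrier M" by auto
    then show ?case using insert lin_homD[OF h] by (auto simp: Pi_def)
  qed
qed

lemma lin_hom_comp:
  assumes "g \<in> lin_hom R M N" "h \<in> lin_hom R N K"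
  shows "(\<lambda>x. h (g x)) \<in> lin_hom R M K"
  using assms unfolding lin_hom_def by auto

lemma lin_hom_add:
  assumes N: "lmod R N" and g: "g \<in> lin_hom R M N" and h: "h \<in> lin_hom R M N"
  shows "(\<lambda>x. g x \<oplus>\<^bsub>N\<^esub> h x) \<in> lin_hom R M N"
proof -
  interpret N: lmod R N by fact
  show ?thesis
  proof (rule lin_homI)
    fix x y assume "x \<in> carrier M" "y \<in> carrier M"
    then show "g (x \<oplus>\<^bsub>M\<^esub> y) \<oplus>\<^bsub>N\<^esub> h (x \<oplus>\<^bsub>M\<^esub> y) = g x \<oplus>\<^bsub>N\<^esub> h x \<oplus>\<^bsub>N\<^esub> (g y \<oplus>\<^bsub>N\<^esub> h y)"
      using lin_homD[OF g] lin_homD[OF h] by (simp add: N.a_ac)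
  next
    fix a x assume "a \<in> carrier R" "x \<in> carrier M"
    then show "g (a \<odot>\<^bsub>M\<^esub> x) \<oplus>\<^bsub>N\<^esub> h (a \<odot>\<^bsub>M\<^esub> x) = a \<odot>\<^bsub>N\<^esub> (g x \<oplus>\<^bsub>N\<^esub> h x)"
      using lin_homD[OF g] lin_homD[OF h] by (simp add: N.smult_r_distr)
  qed (use lin_homD[OF g] lin_homD[OF h] in auto)
qed

lemma lin_hom_diff_fun:
  assumes N: "lmod R N" and g: "g \<in> lin_hom R M N" and h: "h \<in> lin_hom R M N"
  shows "(\<lambda>x. g x \<ominus>\<^bsub>N\<^esub> h x) \<in> lin_hom R M N"
proof -
  interpret N: lmod R N by fact
  show ?thesis
  proof (rule lin_homI)
    fix x y assume "x \<in> carrier M" "y \<in> carrier M"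
    then show "g (x \<oplus>\<^bsub>M\<^esub> y) \<ominus>\<^bsub>N\<^esub> h (x \<oplus>\<^bsub>M\<^esub> y) = (g x \<ominus>\<^bsub>N\<^esub> h x) \<oplus>\<^bsub>N\<^esub> (g y \<ominus>\<^bsub>N\<^esub> h y)"
      using lin_homD[OF g] lin_homD[OF h] by (simp add: N.minus_eq N.minus_add N.a_ac)
  next
    fix a x assume "a \<in> carrier R" "x \<in> carrier M"
    then show "g (a \<odot>\<^bsub>M\<^esub> x) \<ominus>\<^bsub>N\<^esub> h (a \<odot>\<^bsub>M\<^esub> x) = a \<odot>\<^bsub>N\<^esub> (g x \<ominus>\<^bsub>N\<^esub> h x)"
      using lin_homD[OF g] lin_homD[OF h] by (simp add: N.smult_diff_r)
  qed (use lin_homD[OF g] lin_homD[OF h] in auto)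
qed


definition fmod :: "'r ring \<Rightarrow> 'a set \<Rightarrow> ('r, 'a \<Rightarrow> 'r) module" where
  "fmod R S = \<lparr>carrier = {w. (\<forall>a. w a \<in> carrier R) \<and> (\<forall>a. a \<notin> S \<longrightarrow> w a = \<zero>\<^bsub>R\<^esub>)
                   \<and> finite {a. w a \<noteq> \<zero>\<^bsub>R\<^esub>}},
     mult = (\<lambda>v w. v), one = (\<lambda>_. \<zero>\<^bsub>R\<^esub>), zero = (\<lambda>_. \<zero>\<^bsub>R\<^esub>),
     add = (\<lambda>v w a. v a \<oplus>\<^bsub>R\<^esub> w a), smult = (\<lambda>r w a. r \<otimes>\<^bsub>R\<^esub> w a)\<rparr>"

lemma fmod_simps:
  "carrier (fmod R S) = {w. (\<forall>a. w a \<in> carrier R) \<and> (\<forall>a. a \<notin> S \<longrightarrow> w a = \<zero>\<^bsub>R\<^esub>)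
                   \<and> finite {a. w a \<noteq> \<zero>\<^bsub>R\<^esub>}}"
  "zero (fmod R S) = (\<lambda>_. \<zero>\<^bsub>R\<^esub>)"
  "add (fmod R S) = (\<lambda>v w a. v a \<oplus>\<^bsub>R\<^esub> w a)"
  "smult (fmod R S) = (\<lambda>r w a. r \<otimes>\<^bsub>R\<^esub> w a)"
  by (simp_all add: fmod_def)

lemma fmod_carrierI:
  "(\<And>a. w a \<in> carrier R) \<Longrightarrow> (\<And>a. a \<notin> S \<Longrightarrow> w a = \<zero>\<^bsub>R\<^esub>) \<Longrightarrow> finite {a. w a \<noteq> \<zero>\<^bsub>R\<^esub>}
   \<Longrightarrow> w \<in> carrier (fmod R S)"
  by (simp add: fmod_simps)

lemma fmod_carrierD:
  assumes "w \<in> carrier (fmod R S)"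
  shows "w a \<in> carrier R" "a \<notin> S \<Longrightarrow> w a = \<zero>\<^bsub>R\<^esub>" "finite {a. w a \<noteq> \<zero>\<^bsub>R\<^esub>}"
    "{a. w a \<noteq> \<zero>\<^bsub>R\<^esub>} \<subseteq> S"
  using assms by (auto simp: fmod_simps)

lemma lmod_fmod:
  fixes R (structure)
  assumes rR: "ring R"
  shows "lmod R (fmod R S)"
proof -
  interpret ring R by fact
  have ag: "abelian_group (fmod R S)"
  proof (rule abelian_groupI)
    fix x y assume "x \<in> carrier (fmod R S)" "y \<in> carrier (fmod R S)"
    then show "x \<oplus>\<^bsub>fmod R S\<^esub> y \<in> carrier (fmod R S)"
      by (auto simp: fmod_simps intro: finite_subset[of _ "{a. x a \<noteq> \<zero>\<^bsub>R\<^esub>} \<union> {a. y a \<noteq> \<zero>\<^bsub>R\<^esub>}"])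
  next
    show "\<zero>\<^bsub>fmod R S\<^esub> \<in> carrier (fmod R S)" by (simp add: fmod_simps)
  next
    fix x y z assume "x \<in> carrier (fmod R S)" "y \<in> carrier (fmod R S)" "z \<in> carrier (fmod R S)"
    then show "x \<oplus>\<^bsub>fmod R S\<^esub> y \<oplus>\<^bsub>fmod R S\<^esub> z = x \<oplus>\<^bsub>fmod R S\<^esub> (y \<oplus>\<^bsub>fmod R S\<^esub> z)"
      by (auto simp: fmod_simps a_assoc)
  next
    fix x y assume "x \<in> carrier (fmod R S)" "y \<in> carrier (fmod R S)"
    then show "x \<oplus>\<^bsub>fmod R S\<^esub> y = y \<oplus>\<^bsub>fmod R S\<^esub> x"
      by (auto simp: fmod_simps a_comm)
  next
    fix x assume "x \<in> carrier (fmod R S)"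
    then show "\<zero>\<^bsub>fmod R S\<^esub> \<oplus>\<^bsub>fmod R S\<^esub> x = x"
      by (auto simp: fmod_simps)
  next
    fix x assume x: "x \<in> carrier (fmod R S)"
    show "\<exists>y\<in>carrier (fmod R S). y \<oplus>\<^bsub>fmod R S\<^esub> x = \<zero>\<^bsub>fmod R S\<^esub>"
    proof (intro bexI)
      show "(\<lambda>a. \<ominus>\<^bsub>R\<^esub> x a) \<oplus>\<^bsub>fmod R S\<^esub> x = \<zero>\<^bsub>fmod R S\<^esub>"
        using x by (auto simp: fmod_simps l_neg)
      have "{a. \<ominus>\<^bsub>R\<^esub> x a \<noteq> \<zero>\<^bsub>R\<^esub>} \<subseteq> {a. x a \<noteq> \<zero>\<^bsub>R\<^esub>}" using x by (auto simp: fmod_simps)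
      then show "(\<lambda>a. \<ominus>\<^bsub>R\<^esub> x a) \<in> carrier (fmod R S)"
        using x by (auto simp: fmod_simps intro: finite_subset)
    qed
  qed
  show ?thesis
  proof (intro lmod.intro lmod_axioms.intro)
    show "ring R" by fact
    show "abelian_group (fmod R S)" by (rule ag)
  next
    fix a x assume a: "a \<in> carrier R" and x: "x \<in> carrier (fmod R S)"
    have "{b. a \<otimes>\<^bsub>R\<^esub> x b \<noteq> \<zero>\<^bsub>R\<^esub>} \<subseteq> {b. x b \<noteq> \<zero>\<^bsub>R\<^esub>}" using a x by (auto simp: fmod_simps)
    then show "a \<odot>\<^bsub>fmod R S\<^esub> x \<in> carrier (fmod R S)"
      using a x by (auto simp: fmod_simps intro: finite_subset)
  next
    fix a b x assume "a \<in> carrier R" "b \<in> carrier R" "x \<in> carrier (fmod R S)"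
    then show "(a \<oplus> b) \<odot>\<^bsub>fmod R S\<^esub> x = a \<odot>\<^bsub>fmod R S\<^esub> x \<oplus>\<^bsub>fmod R S\<^esub> b \<odot>\<^bsub>fmod R S\<^esub> x"
      by (auto simp: fmod_simps l_distr)
  next
    fix a x y assume "a \<in> carrier R" "x \<in> carrier (fmod R S)" "y \<in> carrier (fmod R S)"
    then show "a \<odot>\<^bsub>fmod R S\<^esub> (x \<oplus>\<^bsub>fmod R S\<^esub> y) = a \<odot>\<^bsub>fmod R S\<^esub> x \<oplus>\<^bsub>fmod R S\<^esub> a \<odot>\<^bsub>fmod R S\<^esub> y"
      by (auto simp: fmod_simps r_distr)
  next
    fix a b x assume "a \<in> carrier R" "b \<in> carrier R" "x \<in> carrier (fmod R S)"
    then show "(a \<otimes> b) \<odot>\<^bsub>fmod R S\<^esub> x = a \<odot>\<^bsub>fmod R S\<^esub> (b \<odot>\<^bsub>fmod R S\<^esub> x)"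
      by (auto simp: fmod_simps m_assoc)
  next
    fix x assume "x \<in> carrier (fmod R S)"
    then show "\<one> \<odot>\<^bsub>fmod R S\<^esub> x = x"
      by (auto simp: fmod_simps)
  qed
qed

lemma finsum_fmod_apply:
  assumes rR: "ring R" and f: "f \<in> A \<rightarrow> carrier (fmod R S)"
  shows "finsum (fmod R S) f A a = finsum R (\<lambda>i. f i a) A"
proof -
  interpret R: ring R by fact
  interpret F: lmod R "fmod R S" by (rule lmod_fmod[OF rR])
  show ?thesis using f
  proof (induct A rule: infinite_finite_induct)
    case (infinite A)
    then show ?case by (simp add: fmod_simps)
  next
    case empty
    then show ?case by (simp add: fmod_simps)
  next
    case (insert i A)
    then have fi: "f i \<in> carrier (fmod R S)" and fA: "f \<in> A \<rightarrow> carrier (fmod R S)" by auto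
    have fa: "(\<lambda>i. f i a) \<in> A \<rightarrow> carrier R" "f i a \<in> carrier R"
      using fA fi by (auto simp: fmod_simps)
    show ?case using insert fi fA fa by (simp add: fmod_simps)
  qed
qed

definition fdelta :: "'r ring \<Rightarrow> 'a \<Rightarrow> 'a \<Rightarrow> 'r" where
  "fdelta R a = (\<lambda>b. if b = a then \<one>\<^bsub>R\<^esub> else \<zero>\<^bsub>R\<^esub>)"

lemma fdelta_carrier: "ring R \<Longrightarrow> a \<in> S \<Longrightarrow> fdelta R a \<in> carrier (fmod R S)"
proof -
  assume "ring R" "a \<in> S"
  then interpret ring R by simp
  show ?thesis
    by (rule fmod_carrierI) (use \<open>a \<in> S\<close> in \<open>auto simp: fdelta_def intro: finite_subset[of _ "{a}"]\<close>)
qed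

definition supp :: "'r ring \<Rightarrow> ('a \<Rightarrow> 'r) \<Rightarrow> 'a set" where
  "supp R w = {a. w a \<noteq> \<zero>\<^bsub>R\<^esub>}"

lemma fmod_decomp:
  assumes rR: "ring R" and w: "w \<in> carrier (fmod R S)"
  shows "w = finsum (fmod R S) (\<lambda>a. w a \<odot>\<^bsub>fmod R S\<^esub> fdelta R a) (supp R w)"
proof -
  interpret R: ring R by fact
  interpret F: lmod R "fmod R S" by (rule lmod_fmod[OF rR])
  have ss: "supp R w \<subseteq> S" "finite (supp R w)" using fmod_carrierD[OF w] by (auto simp: supp_def)
  have f: "(\<lambda>a. w a \<odot>\<^bsub>fmod R S\<^esub> fdelta R a) \<in> supp R w \<rightarrow> carrier (fmod R S)"
    using ss fmod_carrierD(1)[OF w] by (auto intro!: F.smult_closed fdelta_carrier[OF rR])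
  show ?thesis
  proof
    fix b
    have "finsum (fmod R S) (\<lambda>a. w a \<odot>\<^bsub>fmod R S\<^esub> fdelta R a) (supp R w) b
        = finsum R (\<lambda>a. (w a \<odot>\<^bsub>fmod R S\<^esub> fdelta R a) b) (supp R w)"
      by (rule finsum_fmod_apply[OF rR f])
    also have "\<dots> = finsum R (\<lambda>a. if b = a then w a else \<zero>\<^bsub>R\<^esub>) (supp R w)"
      using fmod_carrierD(1)[OF w]
      by (intro R.finsum_cong') (auto simp: fmod_simps fdelta_def)
    also have "\<dots> = w b"
    proof (cases "b \<in> supp R w")
      case True
      then show ?thesis using ss fmod_carrierD(1)[OF w]
        by (subst R.add.finprod_singleton) auto
    next
      case False
      then have "w b = \<zero>\<^bsub>R\<^esub>" by (simp add: supp_def)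
      moreover have "finsum R (\<lambda>a. if b = a then w a else \<zero>\<^bsub>R\<^esub>) (supp R w) = \<zero>\<^bsub>R\<^esub>"
        using False by (intro R.add.finprod_one_eqI) auto
      ultimately show ?thesis by simp
    qed
    finally show "w b = finsum (fmod R S) (\<lambda>a. w a \<odot>\<^bsub>fmod R S\<^esub> fdelta R a) (supp R w) b" by simp
  qed
qed

definition ext :: "'r ring \<Rightarrow> ('r, 'm) module \<Rightarrow> ('a \<Rightarrow> 'm) \<Rightarrow> ('a \<Rightarrow> 'r) \<Rightarrow> 'm" where
  "ext R X L w = finsum X (\<lambda>a. w a \<odot>\<^bsub>X\<^esub> L a) (supp R w)"

lemma ext_sum:
  assumes X: "lmod R X" and w: "w \<in> carrier (fmod R S)" and A: "finite A" "supp R w \<subseteq> A"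
    and L: "\<And>a. a \<in> A \<Longrightarrow> L a \<in> carrier X"
  shows "ext R X L w = finsum X (\<lambda>a. w a \<odot>\<^bsub>X\<^esub> L a) A"
proof -
  interpret X: lmod R X by fact
  show ?thesis unfolding ext_def
    using fmod_carrierD(1)[OF w] L A
    by (intro X.add.finprod_mono_neutral_cong_left) (auto simp: supp_def)
qed

lemma ext_lin:
  assumes rR: "ring R" and X: "lmod R X" and L: "\<And>a. a \<in> S \<Longrightarrow> L a \<in> carrier X"
  shows "ext R X L \<in> lin_hom R (fmod R S) X"
proof -
  interpret X: lmod R X by fact
  interpret F: lmod R "fmod R S" by (rule lmod_fmod[OF rR])
  show ?thesis
  proof (rule lin_homI)
    fix w assume w: "w \<in> carrier (fmod R S)"
    then have "supp R w \<subseteq> S" using fmod_carrierD(4)[OF w] by (simp add: supp_def)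
    then show "ext R X L w \<in> carrier X" unfolding ext_def
      using L fmod_carrierD(1)[OF w] by (intro X.finsum_closed) auto
  next
    fix v w assume v: "v \<in> carrier (fmod R S)" and w: "w \<in> carrier (fmod R S)"
    let ?A = "supp R v \<union> supp R w"
    have fin: "finite ?A" using fmod_carrierD(3)[OF v] fmod_carrierD(3)[OF w] by (simp add: supp_def)
    have AS: "?A \<subseteq> S" using fmod_carrierD(4)[OF v] fmod_carrierD(4)[OF w] by (auto simp: supp_def)
    have vw: "v \<oplus>\<^bsub>fmod R S\<^esub> w \<in> carrier (fmod R S)" using v w by simp
    have s: "supp R (v \<oplus>\<^bsub>fmod R S\<^esub> w) \<subseteq> ?A"
      using v w by (auto simp: supp_def fmod_simps)
    have "ext R X L (v \<oplus>\<^bsub>fmod R S\<^esub> w) = finsum X (\<lambda>a. (v \<oplus>\<^bsub>fmod R S\<^esub> w) a \<odot>\<^bsub>X\<^esub> L a) ?A"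
      by (rule ext_sum[OF X vw fin s]) (use L AS in auto)
    also have "\<dots> = finsum X (\<lambda>a. v a \<odot>\<^bsub>X\<^esub> L a \<oplus>\<^bsub>X\<^esub> w a \<odot>\<^bsub>X\<^esub> L a) ?A"
      using L AS fmod_carrierD(1)[OF v] fmod_carrierD(1)[OF w]
      by (intro X.finsum_cong') (auto simp: fmod_simps X.smult_l_distr)
    also have "\<dots> = finsum X (\<lambda>a. v a \<odot>\<^bsub>X\<^esub> L a) ?A \<oplus>\<^bsub>X\<^esub> finsum X (\<lambda>a. w a \<odot>\<^bsub>X\<^esub> L a) ?A"
      using L AS fmod_carrierD(1)[OF v] fmod_carrierD(1)[OF w]
      by (intro X.finsum_addf) auto
    also have "\<dots> = ext R X L v \<oplus>\<^bsub>X\<^esub> ext R X L w"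
    proof -
      have e1: "ext R X L v = finsum X (\<lambda>a. v a \<odot>\<^bsub>X\<^esub> L a) ?A"
        by (rule ext_sum[OF X v fin]) (use L AS in auto)
      have e2: "ext R X L w = finsum X (\<lambda>a. w a \<odot>\<^bsub>X\<^esub> L a) ?A"
        by (rule ext_sum[OF X w fin]) (use L AS in auto)
      show ?thesis by (simp add: e1 e2)
    qed
    finally show "ext R X L (v \<oplus>\<^bsub>fmod R S\<^esub> w) = ext R X L v \<oplus>\<^bsub>X\<^esub> ext R X L w" .
  next
    fix r w assume r: "r \<in> carrier R" and w: "w \<in> carrier (fmod R S)"
    let ?A = "supp R w"
    have fin: "finite ?A" using fmod_carrierD(3)[OF w] by (simp add: supp_def)
    have AS: "?A \<subseteq> S" using fmod_carrierD(4)[OF w] by (auto simp: supp_def)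
    have rw: "r \<odot>\<^bsub>fmod R S\<^esub> w \<in> carrier (fmod R S)" using r w by simp
    have s: "supp R (r \<odot>\<^bsub>fmod R S\<^esub> w) \<subseteq> ?A"
      using r w by (auto simp: supp_def fmod_simps)
    have "ext R X L (r \<odot>\<^bsub>fmod R S\<^esub> w) = finsum X (\<lambda>a. (r \<odot>\<^bsub>fmod R S\<^esub> w) a \<odot>\<^bsub>X\<^esub> L a) ?A"
      by (rule ext_sum[OF X rw fin s]) (use L AS in auto)
    also have "\<dots> = finsum X (\<lambda>a. r \<odot>\<^bsub>X\<^esub> (w a \<odot>\<^bsub>X\<^esub> L a)) ?A"
      using L AS fmod_carrierD(1)[OF w] r
      by (intro X.finsum_cong') (auto simp: fmod_simps X.smult_assoc1)
    also have "\<dots> = r \<odot>\<^bsub>X\<^esub> finsum X (\<lambda>a. w a \<odot>\<^bsub>X\<^esub> L a) ?A"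
      using L AS fmod_carrierD(1)[OF w] r
      by (intro X.smult_finsum_r[symmetric]) auto
    finally show "ext R X L (r \<odot>\<^bsub>fmod R S\<^esub> w) = r \<odot>\<^bsub>X\<^esub> ext R X L w"
      by (simp add: ext_def)
  qed
qed

lemma ext_delta:
  assumes rR: "ring R" and X: "lmod R X" and a: "a \<in> S" and L: "L a \<in> carrier X"
  shows "ext R X L (fdelta R a) = L a"
proof -
  interpret X: lmod R X by fact
  have s: "supp R (fdelta R a) \<subseteq> {a}" by (auto simp: supp_def fdelta_def)
  have "ext R X L (fdelta R a) = finsum X (\<lambda>b. fdelta R a b \<odot>\<^bsub>X\<^esub> L b) {a}"
    by (rule ext_sum[OF X fdelta_carrier[OF rR a] _ s]) (use L in auto)
  also have "\<dots> = L a" using L by (simp add: fdelta_def)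
  finally show ?thesis .
qed

lemma lin_fmod_eq:
  assumes rR: "ring R" and X: "lmod R X"
    and phi: "\<phi> \<in> lin_hom R (fmod R S) X" and psi: "\<psi> \<in> lin_hom R (fmod R S) X"
    and eq: "\<And>a. a \<in> S \<Longrightarrow> \<phi> (fdelta R a) = \<psi> (fdelta R a)"
    and w: "w \<in> carrier (fmod R S)"
  shows "\<phi> w = \<psi> w"
proof -
  interpret X: lmod R X by fact
  interpret F: lmod R "fmod R S" by (rule lmod_fmod[OF rR])
  have F: "lmod R (fmod R S)" by (rule lmod_fmod[OF rR])
  have ss: "supp R w \<subseteq> S" using fmod_carrierD(4)[OF w] by (simp add: supp_def)
  have f: "(\<lambda>a. w a \<odot>\<^bsub>fmod R S\<^esub> fdelta R a) \<in> supp R w \<rightarrow> carrier (fmod R S)"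
    using ss fmod_carrierD(1)[OF w] by (auto intro!: F.smult_closed fdelta_carrier[OF rR])
  have "\<phi> w = finsum X (\<lambda>a. \<phi> (w a \<odot>\<^bsub>fmod R S\<^esub> fdelta R a)) (supp R w)"
    by (subst fmod_decomp[OF rR w]) (rule lin_hom_finsum[OF F X phi f])
  also have "\<dots> = finsum X (\<lambda>a. \<psi> (w a \<odot>\<^bsub>fmod R S\<^esub> fdelta R a)) (supp R w)"
  proof (rule X.finsum_cong')
    fix a assume a: "a \<in> supp R w"
    then have aS: "a \<in> S" using ss by auto
    have d: "fdelta R a \<in> carrier (fmod R S)" by (rule fdelta_carrier[OF rR aS])
    have wa: "w a \<in> carrier R" by (rule fmod_carrierD(1)[OF w])
    show "\<phi> (w a \<odot>\<^bsub>fmod R S\<^esub> fdelta R a) = \<psi> (w a \<odot>\<^bsub>fmod R S\<^esub> fdelta R a)"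
      using lin_homD(3)[OF phi wa d] lin_homD(3)[OF psi wa d] eq[OF aS] by simp
  next
    show "(\<lambda>a. \<psi> (w a \<odot>\<^bsub>fmod R S\<^esub> fdelta R a)) \<in> supp R w \<rightarrow> carrier X"
      using f lin_homD(1)[OF psi] by auto
  qed simp
  also have "\<dots> = \<psi> w"
    by (subst (2) fmod_decomp[OF rR w]) (rule lin_hom_finsum[OF F X psi f, symmetric])
  finally show ?thesis .
qed

lemma lin_fmod_ext:
  assumes rR: "ring R" and X: "lmod R X"
    and phi: "\<phi> \<in> lin_hom R (fmod R S) X" and w: "w \<in> carrier (fmod R S)"
  shows "\<phi> w = ext R X (\<lambda>a. \<phi> (fdelta R a)) w"
proof -
  have c: "\<And>a. a \<in> S \<Longrightarrow> \<phi> (fdelta R a) \<in> carrier X"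
    by (rule lin_homD(1)[OF phi fdelta_carrier[OF rR]])
  show ?thesis
  proof (rule lin_fmod_eq[OF rR X phi ext_lin[OF rR X c] _ w])
    fix a assume a: "a \<in> S"
    show "\<phi> (fdelta R a) = ext R X (\<lambda>a. \<phi> (fdelta R a)) (fdelta R a)"
      using ext_delta[OF rR X a, of "\<lambda>a. \<phi> (fdelta R a)"] c[OF a] by simp
  qed
qed


lemma tr_neg:
  assumes "u \<in> tensor_rel R F S"
  shows "(\<lambda>p. - u p) \<in> tensor_rel R F S"
proof -
  have "(\<lambda>p. (\<lambda>_. 0::int) p - u p) \<in> tensor_rel R F S"
    by (rule tensor_rel.diff[OF tensor_rel.zero assms])
  then show ?thesis by simp
qed

lemma tr_add:
  assumes "u \<in> tensor_rel R F S" "v \<in> tensor_rel R F S"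
  shows "(\<lambda>p. u p + v p) \<in> tensor_rel R F S"
proof -
  have "(\<lambda>p. u p - (\<lambda>p. - v p) p) \<in> tensor_rel R F S"
    by (rule tensor_rel.diff[OF assms(1) tr_neg[OF assms(2)]])
  then show ?thesis by simp
qed

lemma tr_sum:
  assumes "finite A" "\<And>i. i \<in> A \<Longrightarrow> f i \<in> tensor_rel R F S"
  shows "(\<lambda>p. \<Sum>i\<in>A. f i p) \<in> tensor_rel R F S"
  using assms
proof (induct A rule: finite_induct)
  case empty
  then show ?case using tensor_rel.zero by simp
next
  case (insert i A)
  have "(\<lambda>p. f i p + (\<lambda>p. \<Sum>i\<in>A. f i p) p) \<in> tensor_rel R F S"
    by (rule tr_add) (use insert in auto)
  then show ?case using insert by simp
qed

lemma delta_finite: "finite {q. delta p q \<noteq> 0}"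
  by (rule finite_subset[of _ "{p}"]) (auto simp: delta_def)

lemma delta3_supp: "{p. delta A p - delta B p - delta C p \<noteq> (0::int)} \<subseteq> {A, B, C}"
  by (auto simp: delta_def split: if_splits)

lemma delta2_supp: "{p. delta A p - delta B p \<noteq> (0::int)} \<subseteq> {A, B}"
  by (auto simp: delta_def split: if_splits)

lemma tr_finite:
  assumes "u \<in> tensor_rel R F S"
  shows "finite {p. u p \<noteq> 0}"
  using assms
proof (induct rule: tensor_rel.induct)
  case zero
  then show ?case by simp
next
  case (diff u v)
  have "{p. u p - v p \<noteq> 0} \<subseteq> {p. u p \<noteq> 0} \<union> {p. v p \<noteq> 0}" by auto
  then show ?case using diff by (meson finite_UnI finite_subset)
next
  case (rel_l a a' x)
  show ?case by (rule finite_subset[OF delta3_supp]) simp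
next
  case (rel_r a x x')
  show ?case by (rule finite_subset[OF delta3_supp]) simp
next
  case (rel_bal a r x)
  show ?case by (rule finite_subset[OF delta2_supp]) simp
qed


subsection \<open>Equational criterion for flatness\<close>

lemma (in abelian_group) finsum_neg:
  assumes "f \<in> A \<rightarrow> carrier G"
  shows "finsum G (\<lambda>i. \<ominus> f i) A = \<ominus> finsum G f A"
  using assms
proof (induct A rule: infinite_finite_induct)
  case (insert i A)
  then have fi: "f i \<in> carrier G" and fA: "f \<in> A \<rightarrow> carrier G" by auto
  have "finsum G (\<lambda>i. \<ominus> f i) (insert i A) = \<ominus> f i \<oplus> finsum G (\<lambda>i. \<ominus> f i) A"
    using insert fi fA by (intro finsum_insert) auto
  also have "\<dots> = \<ominus> f i \<oplus> \<ominus> finsum G f A" using insert fA by simp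
  also have "\<dots> = \<ominus> (f i \<oplus> finsum G f A)" using fi fA by (simp add: minus_add)
  also have "\<dots> = \<ominus> finsum G f (insert i A)" using insert fi fA by simp
  finally show ?case .
next
  case (infinite A)
  then show ?case by (simp add: minus_equality[of \<zero> \<zero>])
next
  case empty
  then show ?case by (simp add: minus_equality[of \<zero> \<zero>])
qed

locale eqc = lmod R F for R (structure) and F +
  fixes n :: nat and a :: "nat \<Rightarrow> 'a" and x :: "nat \<Rightarrow> 'b"
  assumes flat: "flat_module R F"
    and a_in: "\<And>i. a i \<in> carrier R" and x_in: "\<And>i. x i \<in> carrier F"
    and rel: "finsum F (\<lambda>i. a i \<odot>\<^bsub>F\<^esub> x i) {..<n} = \<zero>\<^bsub>F\<^esub>"
begin

definition lin_a :: "(nat \<Rightarrow> 'a) \<Rightarrow> 'a" where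
  "lin_a c = finsum R (\<lambda>i. a i \<otimes> c i) {..<n}"

definition Rvec :: "(nat \<Rightarrow> 'a) set" where
  "Rvec = {c. \<forall>i. c i \<in> carrier R}"

definition Iset :: "'a set" where
  "Iset = lin_a ` Rvec"

definition Kset :: "(nat \<Rightarrow> 'a) set" where
  "Kset = {c \<in> Rvec. lin_a c = \<zero>}"

definition cc :: "'a \<Rightarrow> nat \<Rightarrow> 'a" where
  "cc r = (SOME c. c \<in> Rvec \<and> lin_a c = r)"

lemma lin_a_closed: "c \<in> Rvec \<Longrightarrow> lin_a c \<in> carrier R"
  unfolding lin_a_def Rvec_def using a_in by (intro R.finsum_closed) auto

lemma lin_a_add: "c \<in> Rvec \<Longrightarrow> d \<in> Rvec \<Longrightarrow> lin_a (\<lambda>i. c i \<oplus> d i) = lin_a c \<oplus> lin_a d"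
  unfolding lin_a_def Rvec_def using a_in
  by (simp add: r_distr R.finsum_addf Pi_def)

lemma lin_a_neg: "c \<in> Rvec \<Longrightarrow> lin_a (\<lambda>i. \<ominus> c i) = \<ominus> lin_a c"
  unfolding lin_a_def Rvec_def using a_in
  by (simp add: r_minus R.finsum_neg Pi_def)

lemma lin_a_diff: "c \<in> Rvec \<Longrightarrow> d \<in> Rvec \<Longrightarrow> lin_a (\<lambda>i. c i \<ominus> d i) = lin_a c \<ominus> lin_a d"
proof -
  assume c: "c \<in> Rvec" and d: "d \<in> Rvec"
  have nd: "(\<lambda>i. \<ominus> d i) \<in> Rvec" using d by (auto simp: Rvec_def)
  have "lin_a (\<lambda>i. c i \<ominus> d i) = lin_a (\<lambda>i. c i \<oplus> (\<lambda>i. \<ominus> d i) i)" by (simp add: R.minus_eq)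
  also have "\<dots> = lin_a c \<oplus> lin_a (\<lambda>i. \<ominus> d i)" by (rule lin_a_add[OF c nd])
  also have "\<dots> = lin_a c \<ominus> lin_a d" by (simp add: lin_a_neg[OF d] R.minus_eq)
  finally show ?thesis .
qed

lemma lin_a_rmul: "c \<in> Rvec \<Longrightarrow> r \<in> carrier R \<Longrightarrow> lin_a (\<lambda>i. c i \<otimes> r) = lin_a c \<otimes> r"
proof -
  assume c: "c \<in> Rvec" and r: "r \<in> carrier R"
  have "lin_a c \<otimes> r = finsum R (\<lambda>i. (a i \<otimes> c i) \<otimes> r) {..<n}"
    unfolding lin_a_def using a_in c r by (intro R.finsum_ldistr) (auto simp: Rvec_def)
  also have "\<dots> = lin_a (\<lambda>i. c i \<otimes> r)"
    unfolding lin_a_def using a_in c r by (intro R.finsum_cong') (auto simp: Rvec_def m_assoc)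
  finally show ?thesis by simp
qed

lemma lin_a_unit: "j < n \<Longrightarrow> lin_a (fdelta R j) = a j"
proof -
  assume j: "j < n"
  have "lin_a (fdelta R j) = finsum R (\<lambda>i. if j = i then a i else \<zero>) {..<n}"
    unfolding lin_a_def using a_in by (intro R.finsum_cong') (auto simp: fdelta_def)
  also have "\<dots> = a j" using j a_in by (subst R.add.finprod_singleton) auto
  finally show ?thesis .
qed

lemma fdelta_Rvec: "fdelta R j \<in> Rvec"
  by (auto simp: Rvec_def fdelta_def)

lemma cc_spec: "r \<in> Iset \<Longrightarrow> cc r \<in> Rvec \<and> lin_a (cc r) = r"
proof -
  assume "r \<in> Iset"
  then obtain c where "c \<in> Rvec" "lin_a c = r" by (auto simp: Iset_def)
  then show ?thesis unfolding cc_def by (rule someI[of "\<lambda>c. c \<in> Rvec \<and> lin_a c = r", OF conjI])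
qed

lemma Iset_carrier: "Iset \<subseteq> carrier R"
  unfolding Iset_def using lin_a_closed by auto

lemma a_in_Iset: "i < n \<Longrightarrow> a i \<in> Iset"
  unfolding Iset_def using lin_a_unit fdelta_Rvec by (metis image_eqI)

lemma Iset_add: "r \<in> Iset \<Longrightarrow> s \<in> Iset \<Longrightarrow> r \<oplus> s \<in> Iset"
proof -
  assume "r \<in> Iset" "s \<in> Iset"
  then obtain c d where c: "c \<in> Rvec" "r = lin_a c" and d: "d \<in> Rvec" "s = lin_a d"
    by (auto simp: Iset_def)
  have "(\<lambda>i. c i \<oplus> d i) \<in> Rvec" using c d by (auto simp: Rvec_def)
  then show ?thesis unfolding Iset_def using lin_a_add[OF c(1) d(1)] c d by (metis image_eqI)
qed

lemma Iset_rmul: "r \<in> Iset \<Longrightarrow> s \<in> carrier R \<Longrightarrow> r \<otimes> s \<in> Iset"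
proof -
  assume "r \<in> Iset" and s: "s \<in> carrier R"
  then obtain c where c: "c \<in> Rvec" "r = lin_a c" by (auto simp: Iset_def)
  have "(\<lambda>i. c i \<otimes> s) \<in> Rvec" using c s by (auto simp: Rvec_def)
  then show ?thesis unfolding Iset_def using lin_a_rmul[OF c(1) s] c by (metis image_eqI)
qed

lemma Iset_neg: "r \<in> Iset \<Longrightarrow> \<ominus> r \<in> Iset"
proof -
  assume "r \<in> Iset"
  then obtain c where c: "c \<in> Rvec" "r = lin_a c" by (auto simp: Iset_def)
  have "(\<lambda>i. \<ominus> c i) \<in> Rvec" using c by (auto simp: Rvec_def)
  then show ?thesis unfolding Iset_def using lin_a_neg[OF c(1)] c by (metis image_eqI)
qed

lemma Iset_zero: "\<zero> \<in> Iset"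
proof -
  have z: "(\<lambda>i. \<zero>) \<in> Rvec" by (auto simp: Rvec_def)
  have "lin_a (\<lambda>i. \<zero>) = \<zero>" unfolding lin_a_def using a_in by (simp add: R.finsum_zero)
  then show ?thesis unfolding Iset_def using z by (metis image_eqI)
qed

lemma Iset_right_ideal: "right_ideal R Iset"
  unfolding right_ideal_def
proof (intro conjI ballI)
  show "subgroup Iset (add_monoid R)"
  proof (rule subgroup.intro)
    show "Iset \<subseteq> carrier (add_monoid R)" using Iset_carrier by simp
    show "\<And>x y. x \<in> Iset \<Longrightarrow> y \<in> Iset \<Longrightarrow> x \<otimes>\<^bsub>add_monoid R\<^esub> y \<in> Iset"
      using Iset_add by simp
    show "\<one>\<^bsub>add_monoid R\<^esub> \<in> Iset" using Iset_zero by simp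
    show "\<And>x. x \<in> Iset \<Longrightarrow> inv\<^bsub>add_monoid R\<^esub> x \<in> Iset"
      using Iset_neg by (simp add: a_inv_def)
  qed
next
  fix r s assume "r \<in> Iset" "s \<in> carrier R"
  then show "r \<otimes> s \<in> Iset" by (rule Iset_rmul)
qed

lemma Kset_Rvec: "c \<in> Kset \<Longrightarrow> c \<in> Rvec"
  by (simp add: Kset_def)

inductive_set KF :: "(nat \<Rightarrow> 'b) set" where
  KF0: "(\<lambda>i. \<zero>\<^bsub>F\<^esub>) \<in> KF"
| KFs: "v \<in> KF \<Longrightarrow> c \<in> Kset \<Longrightarrow> y \<in> carrier F \<Longrightarrow> (\<lambda>i. v i \<oplus>\<^bsub>F\<^esub> c i \<odot>\<^bsub>F\<^esub> y) \<in> KF"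

lemma KF_in: "v \<in> KF \<Longrightarrow> v i \<in> carrier F"
  by (induct rule: KF.induct) (auto simp: Kset_def Rvec_def)

lemma KF_add:
  assumes v: "v \<in> KF" and w: "w \<in> KF"
  shows "(\<lambda>i. v i \<oplus>\<^bsub>F\<^esub> w i) \<in> KF"
  using w
proof (induct rule: KF.induct)
  case KF0
  then show ?case using KF_in[OF v] v by simp
next
  case (KFs w c y)
  have "(\<lambda>i. (\<lambda>i. v i \<oplus>\<^bsub>F\<^esub> w i) i \<oplus>\<^bsub>F\<^esub> c i \<odot>\<^bsub>F\<^esub> y) \<in> KF"
    using KFs by (intro KF.KFs) auto
  moreover have "(\<lambda>i. (\<lambda>i. v i \<oplus>\<^bsub>F\<^esub> w i) i \<oplus>\<^bsub>F\<^esub> c i \<odot>\<^bsub>F\<^esub> y)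
      = (\<lambda>i. v i \<oplus>\<^bsub>F\<^esub> (w i \<oplus>\<^bsub>F\<^esub> c i \<odot>\<^bsub>F\<^esub> y))"
    using KF_in[OF v] KF_in[OF KFs(1)] KFs(3,4)
    by (auto simp: M.a_assoc Kset_def Rvec_def)
  ultimately show ?case by simp
qed

lemma KF_single: "c \<in> Kset \<Longrightarrow> y \<in> carrier F \<Longrightarrow> (\<lambda>i. c i \<odot>\<^bsub>F\<^esub> y) \<in> KF"
proof -
  assume c: "c \<in> Kset" and y: "y \<in> carrier F"
  have "(\<lambda>i. (\<lambda>i. \<zero>\<^bsub>F\<^esub>) i \<oplus>\<^bsub>F\<^esub> c i \<odot>\<^bsub>F\<^esub> y) \<in> KF"
    by (rule KF.KFs[OF KF.KF0 c y])
  then show ?thesis using c y by (simp add: Kset_def Rvec_def)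
qed

lemma Kset_neg: "c \<in> Kset \<Longrightarrow> (\<lambda>i. \<ominus> c i) \<in> Kset"
  using lin_a_neg by (auto simp: Kset_def Rvec_def)

lemma KF_neg: "v \<in> KF \<Longrightarrow> (\<lambda>i. \<ominus>\<^bsub>F\<^esub> v i) \<in> KF"
proof (induct v rule: KF.induct)
  case KF0
  have e: "(\<lambda>i. \<ominus>\<^bsub>F\<^esub> \<zero>\<^bsub>F\<^esub>) = (\<lambda>i. \<zero>\<^bsub>F\<^esub>)" by (simp add: M.minus_equality[of "\<zero>\<^bsub>F\<^esub>" "\<zero>\<^bsub>F\<^esub>"])
  show ?case unfolding e by (rule KF.KF0)
next
  case (KFs v c y)
  have "(\<lambda>i. (\<lambda>i. \<ominus>\<^bsub>F\<^esub> v i) i \<oplus>\<^bsub>F\<^esub> (\<lambda>i. \<ominus> c i) i \<odot>\<^bsub>F\<^esub> y) \<in> KF"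
    using KFs Kset_neg by (intro KF.KFs) auto
  moreover have "(\<lambda>i. (\<lambda>i. \<ominus>\<^bsub>F\<^esub> v i) i \<oplus>\<^bsub>F\<^esub> (\<lambda>i. \<ominus> c i) i \<odot>\<^bsub>F\<^esub> y)
      = (\<lambda>i. \<ominus>\<^bsub>F\<^esub> (v i \<oplus>\<^bsub>F\<^esub> c i \<odot>\<^bsub>F\<^esub> y))"
    using KF_in[OF KFs(1)] KFs(3,4)
    by (auto simp: M.minus_add smult_minus_l Kset_def Rvec_def)
  ultimately show ?case by simp
qed

lemma KF_diff: "v \<in> KF \<Longrightarrow> w \<in> KF \<Longrightarrow> (\<lambda>i. v i \<ominus>\<^bsub>F\<^esub> w i) \<in> KF"
  using KF_add[of v "\<lambda>i. \<ominus>\<^bsub>F\<^esub> w i"] KF_neg[of w] by (simp add: M.minus_eq)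

lemma KF_finsum:
  assumes "finite A" "\<And>j. j \<in> A \<Longrightarrow> (\<lambda>i. f j i) \<in> KF"
  shows "(\<lambda>i. finsum F (\<lambda>j. f j i) A) \<in> KF"
  using assms
proof (induct A rule: finite_induct)
  case empty
  then show ?case using KF.KF0 by simp
next
  case (insert j A)
  have fin: "\<And>j' i. j' \<in> insert j A \<Longrightarrow> f j' i \<in> carrier F" using insert KF_in by blast
  have "(\<lambda>i. (\<lambda>i. f j i) i \<oplus>\<^bsub>F\<^esub> (\<lambda>i. finsum F (\<lambda>j. f j i) A) i) \<in> KF"
    using insert by (intro KF_add) auto
  moreover have "\<And>i. finsum F (\<lambda>j. f j i) (insert j A) = f j i \<oplus>\<^bsub>F\<^esub> finsum F (\<lambda>j. f j i) A"
    using insert fin by (intro M.finsum_insert) auto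
  ultimately show ?case by simp
qed

lemma KF_extract:
  "v \<in> KF \<Longrightarrow> \<exists>(m::nat) (b::nat \<Rightarrow> nat \<Rightarrow> 'a) (y::nat \<Rightarrow> 'b). (\<forall>i j. b i j \<in> carrier R) \<and> (\<forall>j. y j \<in> carrier F)
     \<and> (\<forall>j<m. lin_a (\<lambda>i. b i j) = \<zero>) \<and> (\<forall>i. v i = finsum F (\<lambda>j. b i j \<odot>\<^bsub>F\<^esub> y j) {..<m})"
proof (induct rule: KF.induct)
  case KF0
  show ?case
    apply (rule exI[where x="0::nat"])
    apply (rule exI[where x="\<lambda>(i::nat) (j::nat). \<zero>"])
    apply (rule exI[where x="\<lambda>j::nat. \<zero>\<^bsub>F\<^esub>"])
    by simp
next
  case (KFs v c y)
  obtain m :: nat and b :: "nat \<Rightarrow> nat \<Rightarrow> 'a" and ys :: "nat \<Rightarrow> 'b" where H: "(\<forall>i j. b i j \<in> carrier R) \<and> (\<forall>j. ys j \<in> carrier F)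
    \<and> (\<forall>j<m. lin_a (\<lambda>i. b i j) = \<zero>) \<and> (\<forall>i. v i = finsum F (\<lambda>j. b i j \<odot>\<^bsub>F\<^esub> ys j) {..<m})"
    using KFs(2) by (elim exE) (rule that, assumption)
  then have b: "\<forall>i j. b i j \<in> carrier R" and ys: "\<forall>j. ys j \<in> carrier F"
    and k: "\<forall>j<m. lin_a (\<lambda>i. b i j) = \<zero>" and v: "\<forall>i. v i = finsum F (\<lambda>j. b i j \<odot>\<^bsub>F\<^esub> ys j) {..<m}"
    by auto
  define b' where "b' = (\<lambda>i j. if j = m then c i else b i j)"
  define y' where "y' = (\<lambda>j. if j = m then y else ys j)"
  have c: "\<forall>i. c i \<in> carrier R" "lin_a c = \<zero>" using KFs(3) by (auto simp: Kset_def Rvec_def)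
  have b'c: "\<forall>i j. b' i j \<in> carrier R" using b c by (simp add: b'_def)
  have y'c: "\<forall>j. y' j \<in> carrier F" using ys KFs(4) by (simp add: y'_def)
  have k': "\<forall>j<Suc m. lin_a (\<lambda>i. b' i j) = \<zero>"
    using k c by (auto simp: b'_def less_Suc_eq)
  have v': "\<forall>i. v i \<oplus>\<^bsub>F\<^esub> c i \<odot>\<^bsub>F\<^esub> y = finsum F (\<lambda>j. b' i j \<odot>\<^bsub>F\<^esub> y' j) {..<Suc m}"
  proof
    fix i
    have "finsum F (\<lambda>j. b' i j \<odot>\<^bsub>F\<^esub> y' j) {..<Suc m}
        = b' i m \<odot>\<^bsub>F\<^esub> y' m \<oplus>\<^bsub>F\<^esub> finsum F (\<lambda>j. b' i j \<odot>\<^bsub>F\<^esub> y' j) {..<m}"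
      unfolding lessThan_Suc using b'c y'c by (intro M.finsum_insert) auto
    also have "finsum F (\<lambda>j. b' i j \<odot>\<^bsub>F\<^esub> y' j) {..<m} = v i"
      using v b ys by (auto simp: b'_def y'_def intro!: M.finsum_cong')
    finally show "v i \<oplus>\<^bsub>F\<^esub> c i \<odot>\<^bsub>F\<^esub> y = finsum F (\<lambda>j. b' i j \<odot>\<^bsub>F\<^esub> y' j) {..<Suc m}"
      using KF_in[OF KFs(1)] c KFs(4) by (simp add: b'_def y'_def M.a_comm)
  qed
  show ?case using b'c y'c k' v' by blast
qed

definition phi :: "nat \<Rightarrow> 'a \<times> 'b \<Rightarrow> 'b" where
  "phi k p = (if fst p \<in> Iset \<and> snd p \<in> carrier F then cc (fst p) k \<odot>\<^bsub>F\<^esub> snd p else \<zero>\<^bsub>F\<^esub>)"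

definition Phi :: "nat \<Rightarrow> ('a \<times> 'b \<Rightarrow> int) \<Rightarrow> 'b" where
  "Phi k u = finsum F (\<lambda>p. [u p] \<cdot>\<^bsub>F\<^esub> phi k p) {p. u p \<noteq> 0}"

lemma cc_in: "r \<in> Iset \<Longrightarrow> cc r k \<in> carrier R"
  using cc_spec by (auto simp: Rvec_def)

lemma phi_in: "phi k p \<in> carrier F"
  unfolding phi_def using cc_in by auto

lemma phi_eq: "r \<in> Iset \<Longrightarrow> y \<in> carrier F \<Longrightarrow> phi k (r, y) = cc r k \<odot>\<^bsub>F\<^esub> y"
  by (simp add: phi_def)

lemma pow0: "[(0::int)] \<cdot>\<^bsub>F\<^esub> y = \<zero>\<^bsub>F\<^esub>"
  by (simp add: add_pow_def)

lemma Phi_sum: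
  assumes "finite A" "{p. u p \<noteq> 0} \<subseteq> A"
  shows "Phi k u = finsum F (\<lambda>p. [u p] \<cdot>\<^bsub>F\<^esub> phi k p) A"
  unfolding Phi_def using assms phi_in
  by (intro M.add.finprod_mono_neutral_cong_left) (auto simp: pow0)

lemma Phi_in: "Phi k u \<in> carrier F"
  unfolding Phi_def using phi_in by (intro M.finsum_closed) auto

lemma Phi_add:
  assumes fu: "finite {p. u p \<noteq> 0}" and fv: "finite {p. v p \<noteq> 0}"
  shows "Phi k (\<lambda>p. u p + v p) = Phi k u \<oplus>\<^bsub>F\<^esub> Phi k v"
proof -
  let ?A = "{p. u p \<noteq> 0} \<union> {p. v p \<noteq> 0}"
  have fA: "finite ?A" using fu fv by simp
  have s: "{p. u p + v p \<noteq> 0} \<subseteq> ?A" by auto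
  have "Phi k (\<lambda>p. u p + v p) = finsum F (\<lambda>p. [(u p + v p)] \<cdot>\<^bsub>F\<^esub> phi k p) ?A"
    using Phi_sum[OF fA, of "\<lambda>p. u p + v p"] s by simp
  also have "\<dots> = finsum F (\<lambda>p. [u p] \<cdot>\<^bsub>F\<^esub> phi k p \<oplus>\<^bsub>F\<^esub> [v p] \<cdot>\<^bsub>F\<^esub> phi k p) ?A"
    using phi_in by (intro M.finsum_cong') (auto simp: M.add.int_pow_mult)
  also have "\<dots> = finsum F (\<lambda>p. [u p] \<cdot>\<^bsub>F\<^esub> phi k p) ?A \<oplus>\<^bsub>F\<^esub> finsum F (\<lambda>p. [v p] \<cdot>\<^bsub>F\<^esub> phi k p) ?A"
    using phi_in by (intro M.finsum_addf) auto
  also have "\<dots> = Phi k u \<oplus>\<^bsub>F\<^esub> Phi k v"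
    using Phi_sum[OF fA, of u] Phi_sum[OF fA, of v] by simp
  finally show ?thesis .
qed

lemma Phi_neg:
  assumes fu: "finite {p. u p \<noteq> 0}"
  shows "Phi k (\<lambda>p. - u p) = \<ominus>\<^bsub>F\<^esub> Phi k u"
proof -
  have "Phi k (\<lambda>p. - u p) = finsum F (\<lambda>p. [(- u p)] \<cdot>\<^bsub>F\<^esub> phi k p) {p. u p \<noteq> 0}"
    using Phi_sum[OF fu, of "\<lambda>p. - u p"] by simp
  also have "\<dots> = finsum F (\<lambda>p. \<ominus>\<^bsub>F\<^esub> ([u p] \<cdot>\<^bsub>F\<^esub> phi k p)) {p. u p \<noteq> 0}"
    using phi_in by (intro M.finsum_cong') (auto simp: M.add.int_pow_neg)
  also have "\<dots> = \<ominus>\<^bsub>F\<^esub> Phi k u"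
    unfolding Phi_def using phi_in by (intro M.finsum_neg) auto
  finally show ?thesis .
qed

lemma Phi_diff:
  assumes fu: "finite {p. u p \<noteq> 0}" and fv: "finite {p. v p \<noteq> 0}"
  shows "Phi k (\<lambda>p. u p - v p) = Phi k u \<ominus>\<^bsub>F\<^esub> Phi k v"
proof -
  have fv': "finite {p. - v p \<noteq> 0}" using fv by simp
  have "Phi k (\<lambda>p. u p - v p) = Phi k (\<lambda>p. u p + (\<lambda>p. - v p) p)" by simp
  also have "\<dots> = Phi k u \<oplus>\<^bsub>F\<^esub> Phi k (\<lambda>p. - v p)" by (rule Phi_add[OF fu fv'])
  also have "\<dots> = Phi k u \<ominus>\<^bsub>F\<^esub> Phi k v" by (simp add: Phi_neg[OF fv] M.minus_eq)
  finally show ?thesis .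
qed

lemma Phi_delta: "Phi k (delta p) = phi k p"
proof -
  have "Phi k (delta p) = finsum F (\<lambda>q. [delta p q] \<cdot>\<^bsub>F\<^esub> phi k q) {p}"
    by (rule Phi_sum) (auto simp: delta_def)
  also have "\<dots> = phi k p" using phi_in by (simp add: delta_def)
  finally show ?thesis .
qed

lemma Phi_zero: "Phi k (\<lambda>_. 0) = \<zero>\<^bsub>F\<^esub>"
  by (simp add: Phi_def)

lemma Phi_KF:
  assumes "u \<in> tensor_rel R F Iset"
  shows "(\<lambda>k. Phi k u) \<in> KF"
  using assms
proof (induct rule: tensor_rel.induct)
  case zero
  show ?case unfolding Phi_zero by (rule KF.KF0)
next
  case (diff u v)
  have "(\<lambda>k. Phi k (\<lambda>p. u p - v p)) = (\<lambda>k. Phi k u \<ominus>\<^bsub>F\<^esub> Phi k v)"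
    using Phi_diff[OF tr_finite[OF diff(1)] tr_finite[OF diff(3)]] by simp
  then show ?case using KF_diff[OF diff(2) diff(4)] by simp
next
  case (rel_l r r' y)
  have rr': "r \<oplus> r' \<in> Iset" using rel_l Iset_add by auto
  have rc: "r \<in> carrier R" "r' \<in> carrier R" using rel_l Iset_carrier by auto
  have e: "\<And>k. Phi k (\<lambda>p. delta (r \<oplus> r', y) p - delta (r, y) p - delta (r', y) p)
      = phi k (r \<oplus> r', y) \<ominus>\<^bsub>F\<^esub> phi k (r, y) \<ominus>\<^bsub>F\<^esub> phi k (r', y)"
  proof -
    fix k
    have f1: "finite {p. delta (r \<oplus> r', y) p - delta (r, y) p \<noteq> 0}"
      by (rule finite_subset[OF delta2_supp]) simp
    have "Phi k (\<lambda>p. (\<lambda>p. delta (r \<oplus> r', y) p - delta (r, y) p) p - delta (r', y) p)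
        = Phi k (\<lambda>p. delta (r \<oplus> r', y) p - delta (r, y) p) \<ominus>\<^bsub>F\<^esub> Phi k (delta (r', y))"
      by (rule Phi_diff[OF f1 delta_finite])
    also have "Phi k (\<lambda>p. delta (r \<oplus> r', y) p - delta (r, y) p)
        = Phi k (delta (r \<oplus> r', y)) \<ominus>\<^bsub>F\<^esub> Phi k (delta (r, y))"
      by (rule Phi_diff[OF delta_finite delta_finite])
    finally show "Phi k (\<lambda>p. delta (r \<oplus> r', y) p - delta (r, y) p - delta (r', y) p)
      = phi k (r \<oplus> r', y) \<ominus>\<^bsub>F\<^esub> phi k (r, y) \<ominus>\<^bsub>F\<^esub> phi k (r', y)"
      by (simp add: Phi_delta)
  qed
  define c where "c = (\<lambda>k. cc (r \<oplus> r') k \<ominus> cc r k \<ominus> cc r' k)"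
  have ccs: "cc (r \<oplus> r') \<in> Rvec" "cc r \<in> Rvec" "cc r' \<in> Rvec"
    using cc_spec rr' rel_l by auto
  have cR: "c \<in> Rvec" using ccs by (auto simp: c_def Rvec_def)
  have "lin_a c = lin_a (\<lambda>k. cc (r \<oplus> r') k \<ominus> cc r k) \<ominus> lin_a (cc r')"
    unfolding c_def using ccs by (intro lin_a_diff) (auto simp: Rvec_def)
  also have "\<dots> = (r \<oplus> r') \<ominus> r \<ominus> r'"
    using lin_a_diff[OF ccs(1) ccs(2)] cc_spec rr' rel_l by simp
  also have "\<dots> = \<zero>" using rc by algebra
  finally have cK: "c \<in> Kset" using cR by (simp add: Kset_def)
  have "(\<lambda>k. Phi k (\<lambda>p. delta (r \<oplus> r', y) p - delta (r, y) p - delta (r', y) p)) = (\<lambda>k. c k \<odot>\<^bsub>F\<^esub> y)"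
  proof
    fix k
    have ck: "cc (r \<oplus> r') k \<in> carrier R" "cc r k \<in> carrier R" "cc r' k \<in> carrier R"
      using ccs by (auto simp: Rvec_def)
    show "Phi k (\<lambda>p. delta (r \<oplus> r', y) p - delta (r, y) p - delta (r', y) p) = c k \<odot>\<^bsub>F\<^esub> y"
      unfolding e using rel_l rr' ck by (simp add: phi_eq c_def smult_diff_l)
  qed
  then show ?case using KF_single[OF cK rel_l(3)] by simp
next
  case (rel_r r y y')
  have yy: "y \<oplus>\<^bsub>F\<^esub> y' \<in> carrier F" using rel_r by simp
  have e: "\<And>k. Phi k (\<lambda>p. delta (r, y \<oplus>\<^bsub>F\<^esub> y') p - delta (r, y) p - delta (r, y') p)
      = phi k (r, y \<oplus>\<^bsub>F\<^esub> y') \<ominus>\<^bsub>F\<^esub> phi k (r, y) \<ominus>\<^bsub>F\<^esub> phi k (r, y')"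
  proof -
    fix k
    have f1: "finite {p. delta (r, y \<oplus>\<^bsub>F\<^esub> y') p - delta (r, y) p \<noteq> 0}"
      by (rule finite_subset[OF delta2_supp]) simp
    have "Phi k (\<lambda>p. (\<lambda>p. delta (r, y \<oplus>\<^bsub>F\<^esub> y') p - delta (r, y) p) p - delta (r, y') p)
        = Phi k (\<lambda>p. delta (r, y \<oplus>\<^bsub>F\<^esub> y') p - delta (r, y) p) \<ominus>\<^bsub>F\<^esub> Phi k (delta (r, y'))"
      by (rule Phi_diff[OF f1 delta_finite])
    also have "Phi k (\<lambda>p. delta (r, y \<oplus>\<^bsub>F\<^esub> y') p - delta (r, y) p)
        = Phi k (delta (r, y \<oplus>\<^bsub>F\<^esub> y')) \<ominus>\<^bsub>F\<^esub> Phi k (delta (r, y))"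
      by (rule Phi_diff[OF delta_finite delta_finite])
    finally show "Phi k (\<lambda>p. delta (r, y \<oplus>\<^bsub>F\<^esub> y') p - delta (r, y) p - delta (r, y') p)
      = phi k (r, y \<oplus>\<^bsub>F\<^esub> y') \<ominus>\<^bsub>F\<^esub> phi k (r, y) \<ominus>\<^bsub>F\<^esub> phi k (r, y')"
      by (simp add: Phi_delta)
  qed
  have "(\<lambda>k. Phi k (\<lambda>p. delta (r, y \<oplus>\<^bsub>F\<^esub> y') p - delta (r, y) p - delta (r, y') p)) = (\<lambda>k. \<zero>\<^bsub>F\<^esub>)"
  proof
    fix k
    have ck: "cc r k \<in> carrier R" using cc_in rel_r by auto
    have "cc r k \<odot>\<^bsub>F\<^esub> (y \<oplus>\<^bsub>F\<^esub> y') \<ominus>\<^bsub>F\<^esub> cc r k \<odot>\<^bsub>F\<^esub> y \<ominus>\<^bsub>F\<^esub> cc r k \<odot>\<^bsub>F\<^esub> y' = \<zero>\<^bsub>F\<^esub>"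
      using ck rel_r by (simp add: smult_r_distr M.minus_eq M.minus_add M.r_neg M.a_ac)
    then show "Phi k (\<lambda>p. delta (r, y \<oplus>\<^bsub>F\<^esub> y') p - delta (r, y) p - delta (r, y') p) = \<zero>\<^bsub>F\<^esub>"
      unfolding e using rel_r yy by (simp add: phi_eq)
  qed
  then show ?case using KF.KF0 by simp
next
  case (rel_bal r s y)
  have rs: "r \<otimes> s \<in> Iset" using rel_bal Iset_rmul by auto
  have sy: "s \<odot>\<^bsub>F\<^esub> y \<in> carrier F" using rel_bal by simp
  have rc: "r \<in> carrier R" using rel_bal Iset_carrier by auto
  have e: "\<And>k. Phi k (\<lambda>p. delta (r \<otimes> s, y) p - delta (r, s \<odot>\<^bsub>F\<^esub> y) p)
      = phi k (r \<otimes> s, y) \<ominus>\<^bsub>F\<^esub> phi k (r, s \<odot>\<^bsub>F\<^esub> y)"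
    using Phi_diff[OF delta_finite delta_finite] by (simp add: Phi_delta)
  define c where "c = (\<lambda>k. cc (r \<otimes> s) k \<ominus> cc r k \<otimes> s)"
  have ccs: "cc (r \<otimes> s) \<in> Rvec" "cc r \<in> Rvec"
    using cc_spec rs rel_bal by auto
  have cs: "(\<lambda>k. cc r k \<otimes> s) \<in> Rvec" using ccs rel_bal by (auto simp: Rvec_def)
  have cR: "c \<in> Rvec" using ccs rel_bal by (auto simp: c_def Rvec_def)
  have "lin_a c = lin_a (cc (r \<otimes> s)) \<ominus> lin_a (\<lambda>k. cc r k \<otimes> s)"
    unfolding c_def by (rule lin_a_diff[OF ccs(1) cs])
  also have "\<dots> = (r \<otimes> s) \<ominus> r \<otimes> s"
    using lin_a_rmul[OF ccs(2) rel_bal(2)] cc_spec rs rel_bal by simp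
  also have "\<dots> = \<zero>" using rc rel_bal by (simp add: R.r_neg R.minus_eq)
  finally have cK: "c \<in> Kset" using cR by (simp add: Kset_def)
  have "(\<lambda>k. Phi k (\<lambda>p. delta (r \<otimes> s, y) p - delta (r, s \<odot>\<^bsub>F\<^esub> y) p)) = (\<lambda>k. c k \<odot>\<^bsub>F\<^esub> y)"
  proof
    fix k
    have ck: "cc (r \<otimes> s) k \<in> carrier R" "cc r k \<in> carrier R"
      using ccs by (auto simp: Rvec_def)
    show "Phi k (\<lambda>p. delta (r \<otimes> s, y) p - delta (r, s \<odot>\<^bsub>F\<^esub> y) p) = c k \<odot>\<^bsub>F\<^esub> y"
      unfolding e using rel_bal rs sy ck by (simp add: phi_eq c_def smult_diff_l smult_assoc1)
  qed
  then show ?case using KF_single[OF cK rel_bal(3)] by simp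
qed

definition u0 :: "nat \<Rightarrow> 'a \<times> 'b \<Rightarrow> int" where
  "u0 m = (\<lambda>p. \<Sum>i<m. delta (a i, x i) p)"

lemma u0_supp: "{p. u0 m p \<noteq> 0} \<subseteq> (\<lambda>i. (a i, x i)) ` {..<m}"
proof
  fix p assume "p \<in> {p. u0 m p \<noteq> 0}"
  then have "(\<Sum>i<m. delta (a i, x i) p) \<noteq> 0" by (simp add: u0_def)
  then obtain i where "i < m" "delta (a i, x i) p \<noteq> 0"
    by (metis (mono_tags, lifting) lessThan_iff sum.neutral)
  then show "p \<in> (\<lambda>i. (a i, x i)) ` {..<m}" by (auto simp: delta_def split: if_splits)
qed

lemma u0_finite: "finite {p. u0 m p \<noteq> 0}"
  by (rule finite_subset[OF u0_supp]) simp

lemma u0_Phi: "Phi k (u0 m) = finsum F (\<lambda>i. phi k (a i, x i)) {..<m}"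
proof (induct m)
  case 0
  then show ?case by (simp add: u0_def Phi_zero)
next
  case (Suc m)
  have e: "u0 (Suc m) = (\<lambda>p. u0 m p + delta (a m, x m) p)"
    by (simp add: u0_def)
  have "Phi k (u0 (Suc m)) = Phi k (u0 m) \<oplus>\<^bsub>F\<^esub> Phi k (delta (a m, x m))"
    unfolding e by (rule Phi_add[OF u0_finite delta_finite])
  also have "\<dots> = phi k (a m, x m) \<oplus>\<^bsub>F\<^esub> finsum F (\<lambda>i. phi k (a i, x i)) {..<m}"
    using Suc phi_in by (simp add: Phi_delta M.a_comm)
  also have "\<dots> = finsum F (\<lambda>i. phi k (a i, x i)) {..<Suc m}"
    unfolding lessThan_Suc using phi_in by (intro M.finsum_insert[symmetric]) auto
  finally show ?case .
qed

lemma delta_one_zero_TR: "delta (\<one>, \<zero>\<^bsub>F\<^esub>) \<in> tensor_rel R F (carrier R)"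
proof -
  have "(\<lambda>p. delta (\<one>, \<zero>\<^bsub>F\<^esub> \<oplus>\<^bsub>F\<^esub> \<zero>\<^bsub>F\<^esub>) p - delta (\<one>, \<zero>\<^bsub>F\<^esub>) p - delta (\<one>, \<zero>\<^bsub>F\<^esub>) p)
      \<in> tensor_rel R F (carrier R)"
    by (rule tensor_rel.rel_r) auto
  then have "(\<lambda>p. - delta (\<one>, \<zero>\<^bsub>F\<^esub>) p) \<in> tensor_rel R F (carrier R)" by simp
  from tr_neg[OF this] show ?thesis by simp
qed

lemma D_TR: "(\<lambda>p. (\<Sum>i<m. delta (\<one>, a i \<odot>\<^bsub>F\<^esub> x i) p)
      - delta (\<one>, finsum F (\<lambda>i. a i \<odot>\<^bsub>F\<^esub> x i) {..<m}) p) \<in> tensor_rel R F (carrier R)"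
proof (induct m)
  case 0
  show ?case using tr_neg[OF delta_one_zero_TR] by simp
next
  case (Suc m)
  let ?t = "a m \<odot>\<^bsub>F\<^esub> x m"
  let ?S = "finsum F (\<lambda>i. a i \<odot>\<^bsub>F\<^esub> x i) {..<m}"
  have tS: "?t \<in> carrier F" "?S \<in> carrier F" using a_in x_in by (auto intro: M.finsum_closed)
  have S: "finsum F (\<lambda>i. a i \<odot>\<^bsub>F\<^esub> x i) {..<Suc m} = ?t \<oplus>\<^bsub>F\<^esub> ?S"
    unfolding lessThan_Suc using a_in x_in by (intro M.finsum_insert) auto
  have g: "(\<lambda>p. delta (\<one>, ?t \<oplus>\<^bsub>F\<^esub> ?S) p - delta (\<one>, ?t) p - delta (\<one>, ?S) p) \<in> tensor_rel R F (carrier R)"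
    by (rule tensor_rel.rel_r) (use tS in auto)
  have "(\<lambda>p. (\<lambda>p. (\<Sum>i<m. delta (\<one>, a i \<odot>\<^bsub>F\<^esub> x i) p) - delta (\<one>, ?S) p) p
      - (\<lambda>p. delta (\<one>, ?t \<oplus>\<^bsub>F\<^esub> ?S) p - delta (\<one>, ?t) p - delta (\<one>, ?S) p) p) \<in> tensor_rel R F (carrier R)"
    by (rule tensor_rel.diff[OF Suc g])
  then show ?case unfolding S by (simp add: algebra_simps)
qed

lemma u0_TR: "u0 n \<in> tensor_rel R F (carrier R)"
proof -
  have A: "(\<lambda>p. \<Sum>i<n. (\<lambda>i p. delta (a i, x i) p - delta (\<one>, a i \<odot>\<^bsub>F\<^esub> x i) p) i p) \<in> tensor_rel R F (carrier R)"
  proof (rule tr_sum)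
    fix i
    have "(\<lambda>p. delta (\<one> \<otimes> a i, x i) p - delta (\<one>, a i \<odot>\<^bsub>F\<^esub> x i) p) \<in> tensor_rel R F (carrier R)"
      by (rule tensor_rel.rel_bal) (use a_in x_in in auto)
    then show "(\<lambda>p. delta (a i, x i) p - delta (\<one>, a i \<odot>\<^bsub>F\<^esub> x i) p) \<in> tensor_rel R F (carrier R)"
      using a_in by simp
  qed simp
  have B: "(\<lambda>p. (\<Sum>i<n. delta (\<one>, a i \<odot>\<^bsub>F\<^esub> x i) p) - delta (\<one>, \<zero>\<^bsub>F\<^esub>) p) \<in> tensor_rel R F (carrier R)"
    using D_TR[of n] rel by simp
  have "(\<lambda>p. (\<lambda>p. (\<lambda>p. \<Sum>i<n. (\<lambda>i p. delta (a i, x i) p - delta (\<one>, a i \<odot>\<^bsub>F\<^esub> x i) p) i p) p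
      + (\<lambda>p. (\<Sum>i<n. delta (\<one>, a i \<odot>\<^bsub>F\<^esub> x i) p) - delta (\<one>, \<zero>\<^bsub>F\<^esub>) p) p) p
      + delta (\<one>, \<zero>\<^bsub>F\<^esub>) p) \<in> tensor_rel R F (carrier R)"
    by (rule tr_add[OF tr_add[OF A B] delta_one_zero_TR])
  then show ?thesis by (simp add: u0_def sum_subtractf)
qed

lemma u0_TRI: "u0 n \<in> tensor_rel R F Iset"
proof -
  have fl: "\<forall>I. right_ideal R I \<longrightarrow>
       (\<forall>u :: 'a \<times> 'b \<Rightarrow> int. finite {p. u p \<noteq> 0} \<and> {p. u p \<noteq> 0} \<subseteq> I \<times> carrier F
          \<longrightarrow> u \<in> tensor_rel R F (carrier R) \<longrightarrow> u \<in> tensor_rel R F I)"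
    using flat by (simp add: flat_module_def)
  have s: "{p. u0 n p \<noteq> 0} \<subseteq> Iset \<times> carrier F"
    using u0_supp[of n] a_in_Iset x_in by auto
  show ?thesis using fl Iset_right_ideal u0_finite s u0_TR by blast
qed

lemma target_KF: "(\<lambda>k. finsum F (\<lambda>i. fdelta R i k \<odot>\<^bsub>F\<^esub> x i) {..<n}) \<in> KF"
proof -
  have P: "(\<lambda>k. Phi k (u0 n)) \<in> KF" by (rule Phi_KF[OF u0_TRI])
  have ccR: "\<And>i k. i < n \<Longrightarrow> cc (a i) k \<in> carrier R" using cc_in a_in_Iset by auto
  have fR: "\<And>i k. fdelta R i k \<in> carrier R" by (simp add: fdelta_def)
  have Q: "(\<lambda>k. finsum F (\<lambda>i. (fdelta R i k \<ominus> cc (a i) k) \<odot>\<^bsub>F\<^esub> x i) {..<n}) \<in> KF"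
  proof (rule KF_finsum)
    fix i assume i: "i \<in> {..<n}"
    have c: "(\<lambda>k. fdelta R i k \<ominus> cc (a i) k) \<in> Kset"
    proof -
      have r: "(\<lambda>k. fdelta R i k \<ominus> cc (a i) k) \<in> Rvec" using ccR i fR by (auto simp: Rvec_def intro!: R.minus_closed)
      have "lin_a (\<lambda>k. fdelta R i k \<ominus> cc (a i) k) = lin_a (fdelta R i) \<ominus> lin_a (cc (a i))"
        using cc_spec a_in_Iset i by (intro lin_a_diff fdelta_Rvec) auto
      also have "\<dots> = \<zero>" using lin_a_unit cc_spec a_in_Iset i a_in by (simp add: R.r_neg R.minus_eq)
      finally show ?thesis using r by (simp add: Kset_def)
    qed
    show "(\<lambda>k. (fdelta R i k \<ominus> cc (a i) k) \<odot>\<^bsub>F\<^esub> x i) \<in> KF"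
      by (rule KF_single[OF c x_in])
  qed simp
  have "(\<lambda>k. Phi k (u0 n) \<oplus>\<^bsub>F\<^esub> finsum F (\<lambda>i. (fdelta R i k \<ominus> cc (a i) k) \<odot>\<^bsub>F\<^esub> x i) {..<n}) \<in> KF"
    by (rule KF_add[OF P Q])
  moreover have "\<And>k. Phi k (u0 n) \<oplus>\<^bsub>F\<^esub> finsum F (\<lambda>i. (fdelta R i k \<ominus> cc (a i) k) \<odot>\<^bsub>F\<^esub> x i) {..<n}
      = finsum F (\<lambda>i. fdelta R i k \<odot>\<^bsub>F\<^esub> x i) {..<n}"
  proof -
    fix k
    have "Phi k (u0 n) = finsum F (\<lambda>i. cc (a i) k \<odot>\<^bsub>F\<^esub> x i) {..<n}"
      unfolding u0_Phi using a_in_Iset x_in ccR by (intro M.finsum_cong') (auto simp: phi_eq phi_in)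
    then have "Phi k (u0 n) \<oplus>\<^bsub>F\<^esub> finsum F (\<lambda>i. (fdelta R i k \<ominus> cc (a i) k) \<odot>\<^bsub>F\<^esub> x i) {..<n}
        = finsum F (\<lambda>i. cc (a i) k \<odot>\<^bsub>F\<^esub> x i \<oplus>\<^bsub>F\<^esub> (fdelta R i k \<ominus> cc (a i) k) \<odot>\<^bsub>F\<^esub> x i) {..<n}"
    proof -
      have "finsum F (\<lambda>i. cc (a i) k \<odot>\<^bsub>F\<^esub> x i \<oplus>\<^bsub>F\<^esub> (fdelta R i k \<ominus> cc (a i) k) \<odot>\<^bsub>F\<^esub> x i) {..<n}
        = finsum F (\<lambda>i. cc (a i) k \<odot>\<^bsub>F\<^esub> x i) {..<n} \<oplus>\<^bsub>F\<^esub> finsum F (\<lambda>i. (fdelta R i k \<ominus> cc (a i) k) \<odot>\<^bsub>F\<^esub> x i) {..<n}"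
        using ccR fR x_in by (intro M.finsum_addf) (auto intro!: smult_closed R.minus_closed)
      then show ?thesis using \<open>Phi k (u0 n) = _\<close> by simp
    qed
    also have "\<dots> = finsum F (\<lambda>i. fdelta R i k \<odot>\<^bsub>F\<^esub> x i) {..<n}"
    proof (rule M.finsum_cong')
      fix i assume i: "i \<in> {..<n}"
      have c1: "cc (a i) k \<in> carrier R" using ccR[of i k] i by auto
      have c2: "fdelta R i k \<in> carrier R" by (rule fR)
      have "cc (a i) k \<oplus> (fdelta R i k \<ominus> cc (a i) k) = fdelta R i k"
        using c1 c2 by algebra
      then show "cc (a i) k \<odot>\<^bsub>F\<^esub> x i \<oplus>\<^bsub>F\<^esub> (fdelta R i k \<ominus> cc (a i) k) \<odot>\<^bsub>F\<^esub> x i = fdelta R i k \<odot>\<^bsub>F\<^esub> x i"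
        using ccR[of i k] fR[of i k] i x_in by (simp add: smult_l_distr[symmetric])
    qed (use fR x_in in \<open>auto intro!: smult_closed\<close>)
    finally show "Phi k (u0 n) \<oplus>\<^bsub>F\<^esub> finsum F (\<lambda>i. (fdelta R i k \<ominus> cc (a i) k) \<odot>\<^bsub>F\<^esub> x i) {..<n}
      = finsum F (\<lambda>i. fdelta R i k \<odot>\<^bsub>F\<^esub> x i) {..<n}" .
  qed
  ultimately show ?thesis by simp
qed

lemma target_eq: "k < n \<Longrightarrow> finsum F (\<lambda>i. fdelta R i k \<odot>\<^bsub>F\<^esub> x i) {..<n} = x k"
proof -
  assume k: "k < n"
  have "finsum F (\<lambda>i. fdelta R i k \<odot>\<^bsub>F\<^esub> x i) {..<n} = finsum F (\<lambda>i. if k = i then x i else \<zero>\<^bsub>F\<^esub>) {..<n}"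
    using x_in by (intro M.finsum_cong') (auto simp: fdelta_def)
  also have "\<dots> = x k" using k x_in by (subst M.add.finprod_singleton) auto
  finally show ?thesis .
qed

theorem eq_crit:
  "\<exists>(m::nat) (b::nat \<Rightarrow> nat \<Rightarrow> 'a) (y::nat \<Rightarrow> 'b). (\<forall>i j. b i j \<in> carrier R) \<and> (\<forall>j. y j \<in> carrier F)
     \<and> (\<forall>j<m. finsum R (\<lambda>i. a i \<otimes> b i j) {..<n} = \<zero>)
     \<and> (\<forall>k<n. x k = finsum F (\<lambda>j. b k j \<odot>\<^bsub>F\<^esub> y j) {..<m})"
proof -
  have E: "\<exists>(m::nat) (b::nat \<Rightarrow> nat \<Rightarrow> 'a) (y::nat \<Rightarrow> 'b). (\<forall>i j. b i j \<in> carrier R) \<and> (\<forall>j. y j \<in> carrier F)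
     \<and> (\<forall>j<m. lin_a (\<lambda>i. b i j) = \<zero>)
     \<and> (\<forall>i. (\<lambda>k. finsum F (\<lambda>i. fdelta R i k \<odot>\<^bsub>F\<^esub> x i) {..<n}) i = finsum F (\<lambda>j. b i j \<odot>\<^bsub>F\<^esub> y j) {..<m})"
    by (rule KF_extract[OF target_KF])
  from E show ?thesis
  proof (elim exE conjE)
    fix m :: nat and b :: "nat \<Rightarrow> nat \<Rightarrow> 'a" and y :: "nat \<Rightarrow> 'b"
    assume b: "\<forall>i j. b i j \<in> carrier R" and y: "\<forall>j. y j \<in> carrier F"
      and k: "\<forall>j<m. lin_a (\<lambda>i. b i j) = \<zero>"
      and v: "\<forall>i. (\<lambda>k. finsum F (\<lambda>i. fdelta R i k \<odot>\<^bsub>F\<^esub> x i) {..<n}) i = finsum F (\<lambda>j. b i j \<odot>\<^bsub>F\<^esub> y j) {..<m}"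
    have k': "\<forall>j<m. finsum R (\<lambda>i. a i \<otimes> b i j) {..<n} = \<zero>" using k by (simp add: lin_a_def)
    have v': "\<forall>k<n. x k = finsum F (\<lambda>j. b k j \<odot>\<^bsub>F\<^esub> y j) {..<m}"
      using v target_eq by simp
    show ?thesis
      apply (rule exI[where x=m])
      apply (rule exI[where x=b])
      apply (rule exI[where x=y])
      using b y k' v' by simp
  qed
qed

end


lemma flat_lmod: "flat_module R F \<Longrightarrow> lmod R F"
  by (simp add: flat_module_def left_module_lmod)

lemma eq_criterion:
  assumes flat: "flat_module R F" and a: "\<And>i. a i \<in> carrier R" and x: "\<And>i. x i \<in> carrier F"
    and rel: "finsum F (\<lambda>i. a i \<odot>\<^bsub>F\<^esub> x i) {..<n} = \<zero>\<^bsub>F\<^esub>"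
  shows "\<exists>(m::nat) (b::nat \<Rightarrow> nat \<Rightarrow> 'a) (y::nat \<Rightarrow> 'b). (\<forall>i j. b i j \<in> carrier R) \<and> (\<forall>j. y j \<in> carrier F)
     \<and> (\<forall>j<m. finsum R (\<lambda>i. a i \<otimes>\<^bsub>R\<^esub> b i j) {..<n} = \<zero>\<^bsub>R\<^esub>)
     \<and> (\<forall>k<n. x k = finsum F (\<lambda>j. b k j \<odot>\<^bsub>F\<^esub> y j) {..<m})"
proof -
  interpret eqc R F n a x
    by (intro eqc.intro flat_lmod[OF flat] eqc_axioms.intro flat a x rel)
  show ?thesis by (rule eq_crit)
qed

lemma EQ_fmod:
  fixes n :: nat
  assumes rR: "ring R" and flat: "flat_module R F"
    and phi: "\<phi> \<in> lin_hom R (fmod R {..<n}) F"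
    and v: "v \<in> carrier (fmod R {..<n})" and pv: "\<phi> v = \<zero>\<^bsub>F\<^esub>"
  shows "\<exists>(m::nat) \<psi> \<rho>. \<psi> \<in> lin_hom R (fmod R {..<n}) (fmod R {..<m}) \<and> \<rho> \<in> lin_hom R (fmod R {..<m}) F
     \<and> (\<forall>w\<in>carrier (fmod R {..<n}). \<phi> w = \<rho> (\<psi> w)) \<and> \<psi> v = \<zero>\<^bsub>fmod R {..<m}\<^esub>"
proof -
  interpret R: ring R by fact
  have F: "lmod R F" by (rule flat_lmod[OF flat])
  interpret F: lmod R F by (rule F)
  define x where "x = (\<lambda>i. if i < n then \<phi> (fdelta R i) else \<zero>\<^bsub>F\<^esub>)"
  have xin: "\<And>i. x i \<in> carrier F"
    unfolding x_def using lin_homD(1)[OF phi fdelta_carrier[OF rR]] by auto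
  have vin: "\<And>i. v i \<in> carrier R" using fmod_carrierD(1)[OF v] .
  have rel: "finsum F (\<lambda>i. v i \<odot>\<^bsub>F\<^esub> x i) {..<n} = \<zero>\<^bsub>F\<^esub>"
  proof -
    have "\<phi> v = ext R F (\<lambda>i. \<phi> (fdelta R i)) v" by (rule lin_fmod_ext[OF rR F phi v])
    also have "\<dots> = finsum F (\<lambda>i. v i \<odot>\<^bsub>F\<^esub> \<phi> (fdelta R i)) {..<n}"
      by (rule ext_sum[OF F v]) (use fmod_carrierD(4)[OF v] lin_homD(1)[OF phi fdelta_carrier[OF rR]] in \<open>auto simp: supp_def\<close>)
    also have "\<dots> = finsum F (\<lambda>i. v i \<odot>\<^bsub>F\<^esub> x i) {..<n}"
        using vin lin_homD(1)[OF phi fdelta_carrier[OF rR]]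
      by (intro F.finsum_cong') (auto simp: x_def)
    finally show ?thesis using pv by simp
  qed
  obtain m :: nat and b :: "nat \<Rightarrow> nat \<Rightarrow> 'a" and y :: "nat \<Rightarrow> 'b" where
    b: "\<forall>i j. b i j \<in> carrier R" and y: "\<forall>j. y j \<in> carrier F"
    and k: "\<forall>j<m. finsum R (\<lambda>i. v i \<otimes>\<^bsub>R\<^esub> b i j) {..<n} = \<zero>\<^bsub>R\<^esub>"
    and xe: "\<forall>k<n. x k = finsum F (\<lambda>j. b k j \<odot>\<^bsub>F\<^esub> y j) {..<m}"
    using eq_criterion[OF flat vin xin rel] by (elim exE conjE) (rule that)
  define \<beta> where "\<beta> = (\<lambda>i j. if j < m then b i j else \<zero>\<^bsub>R\<^esub>)"
  have \<beta>in: "\<And>i. \<beta> i \<in> carrier (fmod R {..<m})"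
  proof -
    fix i
    have "{j. \<beta> i j \<noteq> \<zero>\<^bsub>R\<^esub>} \<subseteq> {..<m}" by (auto simp: \<beta>_def)
    then show "\<beta> i \<in> carrier (fmod R {..<m})"
      by (intro fmod_carrierI) (auto simp: \<beta>_def b intro: finite_subset)
  qed
  have Fm: "lmod R (fmod R {..<m})" by (rule lmod_fmod[OF rR])
  interpret Fm: lmod R "fmod R {..<m}" by (rule Fm)
  have Fn: "lmod R (fmod R {..<n})" by (rule lmod_fmod[OF rR])
  define \<psi> where "\<psi> = ext R (fmod R {..<m}) \<beta>"
  define \<rho> where "\<rho> = ext R F y"
  have psi: "\<psi> \<in> lin_hom R (fmod R {..<n}) (fmod R {..<m})"
    unfolding \<psi>_def by (rule ext_lin[OF rR Fm \<beta>in])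
  have rho: "\<rho> \<in> lin_hom R (fmod R {..<m}) F"
    unfolding \<rho>_def using y by (intro ext_lin[OF rR F]) auto
  have comp: "\<forall>w\<in>carrier (fmod R {..<n}). \<phi> w = \<rho> (\<psi> w)"
  proof
    fix w assume w: "w \<in> carrier (fmod R {..<n})"
    show "\<phi> w = \<rho> (\<psi> w)"
    proof (rule lin_fmod_eq[OF rR F phi lin_hom_comp[OF psi rho] _ w])
      fix i :: nat assume i: "i \<in> {..<n}"
      have "\<psi> (fdelta R i) = \<beta> i" unfolding \<psi>_def by (rule ext_delta[OF rR Fm i \<beta>in])
      moreover have "\<rho> (\<beta> i) = finsum F (\<lambda>j. \<beta> i j \<odot>\<^bsub>F\<^esub> y j) {..<m}"
        unfolding \<rho>_def by (rule ext_sum[OF F \<beta>in]) (auto simp: supp_def \<beta>_def y)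
      moreover have "\<dots> = finsum F (\<lambda>j. b i j \<odot>\<^bsub>F\<^esub> y j) {..<m}"
        by (intro F.finsum_cong') (auto simp: \<beta>_def b y)
      moreover have "\<phi> (fdelta R i) = x i" using i by (simp add: x_def)
      ultimately show "\<phi> (fdelta R i) = \<rho> (\<psi> (fdelta R i))" using xe i by simp
    qed
  qed
  have pz: "\<psi> v = \<zero>\<^bsub>fmod R {..<m}\<^esub>"
  proof -
    have "\<psi> v = finsum (fmod R {..<m}) (\<lambda>i. v i \<odot>\<^bsub>fmod R {..<m}\<^esub> \<beta> i) {..<n}"
      unfolding \<psi>_def
      by (rule ext_sum[OF Fm v]) (use fmod_carrierD(4)[OF v] \<beta>in in \<open>auto simp: supp_def\<close>)
    also have "\<dots> = (\<lambda>_. \<zero>\<^bsub>R\<^esub>)"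
    proof
      fix j
      have "finsum (fmod R {..<m}) (\<lambda>i. v i \<odot>\<^bsub>fmod R {..<m}\<^esub> \<beta> i) {..<n} j
          = finsum R (\<lambda>i. (v i \<odot>\<^bsub>fmod R {..<m}\<^esub> \<beta> i) j) {..<n}"
        by (rule finsum_fmod_apply[OF rR]) (use vin \<beta>in in auto)
      also have "\<dots> = finsum R (\<lambda>i. v i \<otimes>\<^bsub>R\<^esub> \<beta> i j) {..<n}"
        by (simp add: fmod_simps)
      also have "\<dots> = \<zero>\<^bsub>R\<^esub>"
      proof (cases "j < m")
        case True
        then show ?thesis using k by (simp add: \<beta>_def)
      next
        case False
        then show ?thesis using vin by (simp add: \<beta>_def)
      qed
      finally show "finsum (fmod R {..<m}) (\<lambda>i. v i \<odot>\<^bsub>fmod R {..<m}\<^esub> \<beta> i) {..<n} j = \<zero>\<^bsub>R\<^esub>" .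
    qed
    finally show ?thesis by (simp add: fmod_simps)
  qed
  show ?thesis using psi rho comp pz by blast
qed

lemma RELS:
  fixes n :: nat
  assumes rR: "ring R" and flat: "flat_module R F"
  shows "\<phi> \<in> lin_hom R (fmod R {..<n}) F \<Longrightarrow> set vs \<subseteq> carrier (fmod R {..<n})
   \<Longrightarrow> (\<forall>v\<in>set vs. \<phi> v = \<zero>\<^bsub>F\<^esub>)
   \<Longrightarrow> \<exists>(m::nat) \<psi> \<rho>. \<psi> \<in> lin_hom R (fmod R {..<n}) (fmod R {..<m}) \<and> \<rho> \<in> lin_hom R (fmod R {..<m}) F
     \<and> (\<forall>w\<in>carrier (fmod R {..<n}). \<phi> w = \<rho> (\<psi> w)) \<and> (\<forall>v\<in>set vs. \<psi> v = \<zero>\<^bsub>fmod R {..<m}\<^esub>)"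
proof (induct vs arbitrary: n \<phi>)
  case Nil
  have "(\<lambda>w. w) \<in> lin_hom R (fmod R {..<n}) (fmod R {..<n})" by (rule lin_homI) auto
  then show ?case using Nil(1) by auto
next
  case (Cons v vs)
  obtain m0 :: nat and \<psi>0 \<rho>0 where psi0: "\<psi>0 \<in> lin_hom R (fmod R {..<n}) (fmod R {..<m0})"
    and rho0: "\<rho>0 \<in> lin_hom R (fmod R {..<m0}) F"
    and c0: "\<forall>w\<in>carrier (fmod R {..<n}). \<phi> w = \<rho>0 (\<psi>0 w)"
    and z0: "\<forall>v\<in>set vs. \<psi>0 v = \<zero>\<^bsub>fmod R {..<m0}\<^esub>"
    using Cons(1)[OF Cons(2)] Cons(3,4) by auto
  have v: "v \<in> carrier (fmod R {..<n})" "\<phi> v = \<zero>\<^bsub>F\<^esub>" using Cons(3,4) by auto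
  have pv: "\<psi>0 v \<in> carrier (fmod R {..<m0})" by (rule lin_homD(1)[OF psi0 v(1)])
  have rv: "\<rho>0 (\<psi>0 v) = \<zero>\<^bsub>F\<^esub>" using c0 v by auto
  obtain m1 :: nat and \<psi>1 \<rho>1 where psi1: "\<psi>1 \<in> lin_hom R (fmod R {..<m0}) (fmod R {..<m1})"
    and rho1: "\<rho>1 \<in> lin_hom R (fmod R {..<m1}) F"
    and c1: "\<forall>w\<in>carrier (fmod R {..<m0}). \<rho>0 w = \<rho>1 (\<psi>1 w)" and z1: "\<psi>1 (\<psi>0 v) = \<zero>\<^bsub>fmod R {..<m1}\<^esub>"
    using EQ_fmod[OF rR flat rho0 pv rv] by auto
  have zz: "\<psi>1 \<zero>\<^bsub>fmod R {..<m0}\<^esub> = \<zero>\<^bsub>fmod R {..<m1}\<^esub>"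
    by (rule lin_hom_zero[OF lmod_fmod[OF rR] lmod_fmod[OF rR] psi1])
  have "(\<lambda>w. \<psi>1 (\<psi>0 w)) \<in> lin_hom R (fmod R {..<n}) (fmod R {..<m1})"
    by (rule lin_hom_comp[OF psi0 psi1])
  moreover have "\<forall>w\<in>carrier (fmod R {..<n}). \<phi> w = \<rho>1 (\<psi>1 (\<psi>0 w))"
    using c0 c1 lin_homD(1)[OF psi0] by auto
  moreover have "\<forall>v'\<in>set (v # vs). \<psi>1 (\<psi>0 v') = \<zero>\<^bsub>fmod R {..<m1}\<^esub>"
    using z1 z0 zz by auto
  ultimately show ?case using rho1 by blast
qed

definition vec :: "'r ring \<Rightarrow> nat \<Rightarrow> 'r list \<Rightarrow> nat \<Rightarrow> 'r" where
  "vec R n rs = (\<lambda>i. if i < n then rs ! i else \<zero>\<^bsub>R\<^esub>)"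

lemma vec_carrier:
  assumes rR: "ring R" and rs: "rs \<in> tuples R n"
  shows "vec R n rs \<in> carrier (fmod R {..<n})"
proof (rule fmod_carrierI)
  interpret ring R by fact
  fix i show "vec R n rs i \<in> carrier R"
    using rs by (auto simp: vec_def tuples_def)
next
  fix i show "i \<notin> {..<n} \<Longrightarrow> vec R n rs i = \<zero>\<^bsub>R\<^esub>" by (simp add: vec_def)
next
  show "finite {i. vec R n rs i \<noteq> \<zero>\<^bsub>R\<^esub>}"
    by (rule finite_subset[of _ "{..<n}"]) (auto simp: vec_def)
qed

lemma ext_vec:
  assumes rR: "ring R" and M: "lmod R M" and rs: "rs \<in> tuples R (length xs)"
    and xs: "set xs \<subseteq> carrier M"
  shows "ext R M (\<lambda>i. xs ! i) (vec R (length xs) rs) = lincomb M rs xs"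
proof -
  interpret M: lmod R M by fact
  have "ext R M (\<lambda>i. xs ! i) (vec R (length xs) rs)
      = finsum M (\<lambda>i. vec R (length xs) rs i \<odot>\<^bsub>M\<^esub> xs ! i) {..<length xs}"
    by (rule ext_sum[OF M vec_carrier[OF rR rs]])
       (use xs in \<open>auto simp: supp_def vec_def\<close>)
  also have "\<dots> = lincomb M rs xs" unfolding lincomb_def
  proof (intro M.finsum_cong')
    fix i assume i: "i \<in> {..<length xs}"
    then show "vec R (length xs) rs i \<odot>\<^bsub>M\<^esub> xs ! i = rs ! i \<odot>\<^bsub>M\<^esub> xs ! i" by (simp add: vec_def)
  next
    have "\<And>i. i < length xs \<Longrightarrow> rs ! i \<in> carrier R"
    proof -
      fix i assume "i < length xs"
      then have "rs ! i \<in> set rs" using rs by (intro nth_mem) (simp add: tuples_def)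
      then show "rs ! i \<in> carrier R" using rs by (auto simp: tuples_def)
    qed
    moreover have "\<And>i. i < length xs \<Longrightarrow> xs ! i \<in> carrier M"
    proof -
      fix i assume "i < length xs"
      then have "xs ! i \<in> set xs" by (rule nth_mem)
      then show "xs ! i \<in> carrier M" using xs by auto
    qed
    ultimately show "(\<lambda>i. rs ! i \<odot>\<^bsub>M\<^esub> xs ! i) \<in> {..<length xs} \<rightarrow> carrier M" by auto
  qed simp
  finally show ?thesis .
qed

theorem lazard:
  assumes rR: "ring R" and M: "lmod R M" and fp: "fin_presented R M"
    and flat: "flat_module R Z" and g: "\<gamma> \<in> lin_hom R M Z"
  shows "\<exists>(m::nat) b \<rho>. b \<in> lin_hom R M (fmod R {..<m}) \<and> \<rho> \<in> lin_hom R (fmod R {..<m}) Z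
     \<and> (\<forall>x\<in>carrier M. \<gamma> x = \<rho> (b x))"
proof -
  interpret R: ring R by fact
  interpret M: lmod R M by fact
  have Z: "lmod R Z" by (rule flat_lmod[OF flat])
  interpret Z: lmod R Z by (rule Z)
  obtain xs rels where xs: "set xs \<subseteq> carrier M"
    and gen: "\<forall>x\<in>carrier M. \<exists>rs\<in>tuples R (length xs). x = lincomb M rs xs"
    and relsT: "set rels \<subseteq> tuples R (length xs)"
    and ker: "\<forall>rs\<in>tuples R (length xs). lincomb M rs xs = \<zero>\<^bsub>M\<^esub> \<longleftrightarrow>
               (\<exists>cs\<in>tuples R (length rels).
                  \<forall>i<length xs. rs ! i = finsum R (\<lambda>j. cs ! j \<otimes>\<^bsub>R\<^esub> (rels ! j ! i)) {..<length rels})"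
    using fp unfolding fin_presented_def by (elim exE conjE) (rule that)
  define n where "n = length xs"
  define \<pi> where "\<pi> = ext R M (\<lambda>i. xs ! i)"
  have Fn: "lmod R (fmod R {..<n})" by (rule lmod_fmod[OF rR])
  interpret Fn: lmod R "fmod R {..<n}" by (rule Fn)
  have pi: "\<pi> \<in> lin_hom R (fmod R {..<n}) M"
    unfolding \<pi>_def using xs by (intro ext_lin[OF rR M]) (auto simp: n_def)
  have pivec: "\<And>rs. rs \<in> tuples R n \<Longrightarrow> \<pi> (vec R n rs) = lincomb M rs xs"
    unfolding \<pi>_def n_def using ext_vec[OF rR M _ xs] by simp
  have relsT': "\<And>j. j < length rels \<Longrightarrow> rels ! j \<in> tuples R n"
    using relsT by (auto simp: n_def)
  have relk: "\<And>j. j < length rels \<Longrightarrow> \<pi> (vec R n (rels ! j)) = \<zero>\<^bsub>M\<^esub>"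
  proof -
    fix j assume j: "j < length rels"
    define cs where "cs = map (\<lambda>k. if k = j then \<one>\<^bsub>R\<^esub> else \<zero>\<^bsub>R\<^esub>) [0..<length rels]"
    have csT: "cs \<in> tuples R (length rels)" by (auto simp: cs_def tuples_def)
    have "\<forall>i<length xs. rels ! j ! i = finsum R (\<lambda>k. cs ! k \<otimes>\<^bsub>R\<^esub> (rels ! k ! i)) {..<length rels}"
    proof (intro allI impI)
      fix i assume i: "i < length xs"
      have rki: "\<And>k. k < length rels \<Longrightarrow> rels ! k ! i \<in> carrier R"
      proof -
        fix k assume k: "k < length rels"
        then have "length (rels ! k) = length xs" "set (rels ! k) \<subseteq> carrier R"
          using relsT' by (auto simp: tuples_def n_def)
        then have "rels ! k ! i \<in> set (rels ! k)" using i by (intro nth_mem) simp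
        then show "rels ! k ! i \<in> carrier R" using \<open>set (rels ! k) \<subseteq> carrier R\<close> by (rule subsetD[rotated])
      qed
      have "finsum R (\<lambda>k. cs ! k \<otimes>\<^bsub>R\<^esub> (rels ! k ! i)) {..<length rels}
          = finsum R (\<lambda>k. if j = k then rels ! k ! i else \<zero>\<^bsub>R\<^esub>) {..<length rels}"
        by (intro R.finsum_cong') (auto simp: cs_def rki)
      also have "\<dots> = rels ! j ! i" using j rki by (subst R.add.finprod_singleton) auto
      finally show "rels ! j ! i = finsum R (\<lambda>k. cs ! k \<otimes>\<^bsub>R\<^esub> (rels ! k ! i)) {..<length rels}" by simp
    qed
    moreover have rjT: "rels ! j \<in> tuples R (length xs)" using relsT' j by (simp add: n_def)
    ultimately have "lincomb M (rels ! j) xs = \<zero>\<^bsub>M\<^esub>"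
      using ker[rule_format, OF rjT] csT by blast
    then show "\<pi> (vec R n (rels ! j)) = \<zero>\<^bsub>M\<^esub>" using pivec relsT' j by simp
  qed
  have kerspan: "\<And>w. w \<in> carrier (fmod R {..<n}) \<Longrightarrow> \<pi> w = \<zero>\<^bsub>M\<^esub> \<Longrightarrow>
      \<exists>cs\<in>tuples R (length rels). w = finsum (fmod R {..<n}) (\<lambda>j. cs ! j \<odot>\<^bsub>fmod R {..<n}\<^esub> vec R n (rels ! j)) {..<length rels}"
  proof -
    fix w assume w: "w \<in> carrier (fmod R {..<n})" and pw: "\<pi> w = \<zero>\<^bsub>M\<^esub>"
    define rs where "rs = map w [0..<n]"
    have rsT: "rs \<in> tuples R n" using fmod_carrierD(1)[OF w] by (auto simp: rs_def tuples_def)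
    have vw: "vec R n rs = w"
    proof
      fix i show "vec R n rs i = w i"
        using fmod_carrierD(2)[OF w, of i] by (auto simp: vec_def rs_def)
    qed
    have "lincomb M rs xs = \<zero>\<^bsub>M\<^esub>" using pivec[OF rsT] vw pw by simp
    then obtain cs where csT: "cs \<in> tuples R (length rels)"
      and cse: "\<forall>i<length xs. rs ! i = finsum R (\<lambda>j. cs ! j \<otimes>\<^bsub>R\<^esub> (rels ! j ! i)) {..<length rels}"
      using ker rsT by (auto simp: n_def)
    have csin: "\<And>j. j < length rels \<Longrightarrow> cs ! j \<in> carrier R" using csT by (auto simp: tuples_def)
    have f: "(\<lambda>j. cs ! j \<odot>\<^bsub>fmod R {..<n}\<^esub> vec R n (rels ! j)) \<in> {..<length rels} \<rightarrow> carrier (fmod R {..<n})"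
      using csin vec_carrier[OF rR relsT'] by auto
    have "w = finsum (fmod R {..<n}) (\<lambda>j. cs ! j \<odot>\<^bsub>fmod R {..<n}\<^esub> vec R n (rels ! j)) {..<length rels}"
    proof
      fix i
      have "finsum (fmod R {..<n}) (\<lambda>j. cs ! j \<odot>\<^bsub>fmod R {..<n}\<^esub> vec R n (rels ! j)) {..<length rels} i
          = finsum R (\<lambda>j. cs ! j \<otimes>\<^bsub>R\<^esub> vec R n (rels ! j) i) {..<length rels}"
        by (subst finsum_fmod_apply[OF rR f]) (simp add: fmod_simps)
      also have "\<dots> = w i"
      proof (cases "i < n")
        case True
        have "finsum R (\<lambda>j. cs ! j \<otimes>\<^bsub>R\<^esub> vec R n (rels ! j) i) {..<length rels}
            = finsum R (\<lambda>j. cs ! j \<otimes>\<^bsub>R\<^esub> (rels ! j ! i)) {..<length rels}"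
          using True by (simp add: vec_def)
        also have "\<dots> = rs ! i" using cse True by (simp add: n_def)
        also have "\<dots> = w i" using True by (simp add: rs_def)
        finally show ?thesis .
      next
        case False
        then have "finsum R (\<lambda>j. cs ! j \<otimes>\<^bsub>R\<^esub> vec R n (rels ! j) i) {..<length rels}
            = finsum R (\<lambda>j. \<zero>\<^bsub>R\<^esub>) {..<length rels}"
          using csin by (intro R.finsum_cong') (auto simp: vec_def)
        also have "\<dots> = w i" using False fmod_carrierD(2)[OF w, of i] by simp
        finally show ?thesis .
      qed
      finally show "w i = finsum (fmod R {..<n}) (\<lambda>j. cs ! j \<odot>\<^bsub>fmod R {..<n}\<^esub> vec R n (rels ! j)) {..<length rels} i"
        by simp
    qed
    then show "\<exists>cs\<in>tuples R (length rels). w = finsum (fmod R {..<n}) (\<lambda>j. cs ! j \<odot>\<^bsub>fmod R {..<n}\<^esub> vec R n (rels ! j)) {..<length rels}"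
      using csT by blast
  qed
  have gpi: "(\<lambda>w. \<gamma> (\<pi> w)) \<in> lin_hom R (fmod R {..<n}) Z" by (rule lin_hom_comp[OF pi g])
  have vsC: "set (map (\<lambda>j. vec R n (rels ! j)) [0..<length rels]) \<subseteq> carrier (fmod R {..<n})"
    using vec_carrier[OF rR relsT'] by auto
  have vsK: "\<forall>v\<in>set (map (\<lambda>j. vec R n (rels ! j)) [0..<length rels]). \<gamma> (\<pi> v) = \<zero>\<^bsub>Z\<^esub>"
    using relk lin_hom_zero[OF M Z g] by auto
  obtain m :: nat and \<psi> \<rho> where psi: "\<psi> \<in> lin_hom R (fmod R {..<n}) (fmod R {..<m})"
    and rho: "\<rho> \<in> lin_hom R (fmod R {..<m}) Z"
    and comp: "\<forall>w\<in>carrier (fmod R {..<n}). \<gamma> (\<pi> w) = \<rho> (\<psi> w)"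
    and kill: "\<forall>v\<in>set (map (\<lambda>j. vec R n (rels ! j)) [0..<length rels]). \<psi> v = \<zero>\<^bsub>fmod R {..<m}\<^esub>"
    using RELS[OF rR flat gpi vsC vsK] by blast
  have Fm: "lmod R (fmod R {..<m})" by (rule lmod_fmod[OF rR])
  interpret Fm: lmod R "fmod R {..<m}" by (rule Fm)
  have pk: "\<And>w. w \<in> carrier (fmod R {..<n}) \<Longrightarrow> \<pi> w = \<zero>\<^bsub>M\<^esub> \<Longrightarrow> \<psi> w = \<zero>\<^bsub>fmod R {..<m}\<^esub>"
  proof -
    fix w assume w: "w \<in> carrier (fmod R {..<n})" and pw: "\<pi> w = \<zero>\<^bsub>M\<^esub>"
    obtain cs where csT: "cs \<in> tuples R (length rels)"
      and we: "w = finsum (fmod R {..<n}) (\<lambda>j. cs ! j \<odot>\<^bsub>fmod R {..<n}\<^esub> vec R n (rels ! j)) {..<length rels}"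
      using kerspan[OF w pw] by blast
    have csin: "\<And>j. j < length rels \<Longrightarrow> cs ! j \<in> carrier R" using csT by (auto simp: tuples_def)
    have f: "(\<lambda>j. cs ! j \<odot>\<^bsub>fmod R {..<n}\<^esub> vec R n (rels ! j)) \<in> {..<length rels} \<rightarrow> carrier (fmod R {..<n})"
      using csin vec_carrier[OF rR relsT'] by auto
    have "\<psi> w = finsum (fmod R {..<m}) (\<lambda>j. \<psi> (cs ! j \<odot>\<^bsub>fmod R {..<n}\<^esub> vec R n (rels ! j))) {..<length rels}"
      unfolding we by (rule lin_hom_finsum[OF Fn Fm psi f])
    also have "\<dots> = finsum (fmod R {..<m}) (\<lambda>j. \<zero>\<^bsub>fmod R {..<m}\<^esub>) {..<length rels}"
    proof (rule Fm.finsum_cong')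
      fix j assume j: "j \<in> {..<length rels}"
      have "\<psi> (cs ! j \<odot>\<^bsub>fmod R {..<n}\<^esub> vec R n (rels ! j)) = cs ! j \<odot>\<^bsub>fmod R {..<m}\<^esub> \<psi> (vec R n (rels ! j))"
        using j csin vec_carrier[OF rR relsT'] by (intro lin_homD(3)[OF psi]) auto
      also have "\<psi> (vec R n (rels ! j)) = \<zero>\<^bsub>fmod R {..<m}\<^esub>" using kill j by auto
      finally show "\<psi> (cs ! j \<odot>\<^bsub>fmod R {..<n}\<^esub> vec R n (rels ! j)) = \<zero>\<^bsub>fmod R {..<m}\<^esub>"
        using csin j by simp
    qed auto
    also have "\<dots> = \<zero>\<^bsub>fmod R {..<m}\<^esub>" by simp
    finally show "\<psi> w = \<zero>\<^bsub>fmod R {..<m}\<^esub>" .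
  qed
  have peq: "\<And>w w'. w \<in> carrier (fmod R {..<n}) \<Longrightarrow> w' \<in> carrier (fmod R {..<n}) \<Longrightarrow> \<pi> w = \<pi> w' \<Longrightarrow> \<psi> w = \<psi> w'"
  proof -
    fix w w' assume w: "w \<in> carrier (fmod R {..<n})" and w': "w' \<in> carrier (fmod R {..<n})"
      and e: "\<pi> w = \<pi> w'"
    have "\<pi> (w \<ominus>\<^bsub>fmod R {..<n}\<^esub> w') = \<zero>\<^bsub>M\<^esub>"
      using lin_hom_diff[OF Fn M pi w w'] e lin_homD(1)[OF pi w'] by (simp add: M.r_neg M.minus_eq)
    then have "\<psi> (w \<ominus>\<^bsub>fmod R {..<n}\<^esub> w') = \<zero>\<^bsub>fmod R {..<m}\<^esub>" using pk w w' by simp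
    then have "\<psi> w \<ominus>\<^bsub>fmod R {..<m}\<^esub> \<psi> w' = \<zero>\<^bsub>fmod R {..<m}\<^esub>"
      using lin_hom_diff[OF Fn Fm psi w w'] by simp
    then show "\<psi> w = \<psi> w'"
      using lin_homD(1)[OF psi w] lin_homD(1)[OF psi w'] Fm.r_neg Fm.minus_eq
      by (metis Fm.add.inv_closed Fm.add.inv_equality Fm.minus_minus)
  qed
  define sel where "sel = (\<lambda>x. SOME w. w \<in> carrier (fmod R {..<n}) \<and> \<pi> w = x)"
  have sel: "\<And>x. x \<in> carrier M \<Longrightarrow> sel x \<in> carrier (fmod R {..<n}) \<and> \<pi> (sel x) = x"
  proof -
    fix x assume x: "x \<in> carrier M"
    then obtain rs where rs: "rs \<in> tuples R n" "x = lincomb M rs xs" using gen by (auto simp: n_def)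
    have "vec R n rs \<in> carrier (fmod R {..<n}) \<and> \<pi> (vec R n rs) = x"
      using vec_carrier[OF rR rs(1)] pivec[OF rs(1)] rs(2) by simp
    then show "sel x \<in> carrier (fmod R {..<n}) \<and> \<pi> (sel x) = x"
      unfolding sel_def by (rule someI[where P="\<lambda>w. w \<in> carrier (fmod R {..<n}) \<and> \<pi> w = x"])
  qed
  define b where "b = (\<lambda>x. \<psi> (sel x))"
  have blin: "b \<in> lin_hom R M (fmod R {..<m})"
  proof (rule lin_homI)
    fix x assume "x \<in> carrier M"
    then show "b x \<in> carrier (fmod R {..<m})" using sel lin_homD(1)[OF psi] by (simp add: b_def)
  next
    fix x y assume x: "x \<in> carrier M" and y: "y \<in> carrier M"
    have s: "sel x \<oplus>\<^bsub>fmod R {..<n}\<^esub> sel y \<in> carrier (fmod R {..<n})" using sel x y by simp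
    have "\<pi> (sel x \<oplus>\<^bsub>fmod R {..<n}\<^esub> sel y) = x \<oplus>\<^bsub>M\<^esub> y" using lin_homD(2)[OF pi] sel x y by simp
    then have "\<psi> (sel (x \<oplus>\<^bsub>M\<^esub> y)) = \<psi> (sel x \<oplus>\<^bsub>fmod R {..<n}\<^esub> sel y)"
      using sel[of "x \<oplus>\<^bsub>M\<^esub> y"] x y s by (intro peq) auto
    then show "b (x \<oplus>\<^bsub>M\<^esub> y) = b x \<oplus>\<^bsub>fmod R {..<m}\<^esub> b y"
      using lin_homD(2)[OF psi] sel x y by (simp add: b_def)
  next
    fix r x assume r: "r \<in> carrier R" and x: "x \<in> carrier M"
    have s: "r \<odot>\<^bsub>fmod R {..<n}\<^esub> sel x \<in> carrier (fmod R {..<n})" using sel x r by simp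
    have "\<pi> (r \<odot>\<^bsub>fmod R {..<n}\<^esub> sel x) = r \<odot>\<^bsub>M\<^esub> x" using lin_homD(3)[OF pi] sel x r by simp
    then have "\<psi> (sel (r \<odot>\<^bsub>M\<^esub> x)) = \<psi> (r \<odot>\<^bsub>fmod R {..<n}\<^esub> sel x)"
      using sel[of "r \<odot>\<^bsub>M\<^esub> x"] x r s by (intro peq) auto
    then show "b (r \<odot>\<^bsub>M\<^esub> x) = r \<odot>\<^bsub>fmod R {..<m}\<^esub> b x"
      using lin_homD(3)[OF psi] sel x r by (simp add: b_def)
  qed
  have "\<forall>x\<in>carrier M. \<gamma> x = \<rho> (b x)"
  proof
    fix x assume x: "x \<in> carrier M"
    have "\<gamma> x = \<gamma> (\<pi> (sel x))" using sel[OF x] by simp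
    also have "\<dots> = \<rho> (b x)" unfolding b_def using comp sel[OF x] by blast
    finally show "\<gamma> x = \<rho> (b x)" .
  qed
  then show ?thesis using blin rho by blast
qed


lemma cx_lmod: "is_complex R C d \<Longrightarrow> lmod R (C n)"
  by (simp add: is_complex_def left_module_lmod)

lemma cx_d: "is_complex R C d \<Longrightarrow> d n \<in> lin_hom R (C n) (C (n - 1))"
  by (simp add: is_complex_def)

lemma cx_dd: "is_complex R C d \<Longrightarrow> x \<in> carrier (C (n + 1)) \<Longrightarrow> d n (d (n + 1) x) = \<zero>\<^bsub>C (n - 1)\<^esub>"
  unfolding is_complex_def by (drule conjunct2, drule conjunct2, drule spec[of _ "n + 1"]) simp

lemma cx_dd': "is_complex R C d \<Longrightarrow> x \<in> carrier (C n) \<Longrightarrow> d (n - 1) (d n x) = \<zero>\<^bsub>C (n - 2)\<^esub>"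
  unfolding is_complex_def by blast

lemma cxm_lin: "cx_morphism R C dC D dD f \<Longrightarrow> f n \<in> lin_hom R (C n) (D n)"
  by (simp add: cx_morphism_def)

lemma cxm_comm: "cx_morphism R C dC D dD f \<Longrightarrow> x \<in> carrier (C n) \<Longrightarrow> dD n (f n x) = f (n - 1) (dC n x)"
  by (simp add: cx_morphism_def)

lemma cx_ring: "is_complex R C d \<Longrightarrow> ring R"
  using cx_lmod lmod_def by blast

subsection \<open>The projective complex\<close>

definition Pb :: "(int \<Rightarrow> ('r, 'n) module) \<Rightarrow> int \<Rightarrow> (bool \<times> 'n) set" where
  "Pb N n = {True} \<times> carrier (N n) \<union> {False} \<times> carrier (N (n + 1))"

definition Pc :: "'r ring \<Rightarrow> (int \<Rightarrow> ('r, 'n) module) \<Rightarrow> int \<Rightarrow> ('r, bool \<times> 'n \<Rightarrow> 'r) module" where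
  "Pc R N n = fmod R (Pb N n)"

definition dPc :: "'r ring \<Rightarrow> int \<Rightarrow> (bool \<times> 'n \<Rightarrow> 'r) \<Rightarrow> (bool \<times> 'n \<Rightarrow> 'r)" where
  "dPc R n w = (\<lambda>p. if fst p then \<zero>\<^bsub>R\<^esub> else w (True, snd p))"

definition hPc :: "'r ring \<Rightarrow> (int \<Rightarrow> ('r, 'n) module) \<Rightarrow> (int \<Rightarrow> 'n \<Rightarrow> 'n) \<Rightarrow> int \<Rightarrow> (bool \<times> 'n \<Rightarrow> 'r) \<Rightarrow> 'n" where
  "hPc R N dN n = ext R (N n) (\<lambda>p. if fst p then snd p else dN (n + 1) (snd p))"

lemma dPc_delta_T: "dPc R n (fdelta R (True, y)) = fdelta R (False, y)"
  by (auto simp: dPc_def fdelta_def)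

lemma dPc_delta_F: "dPc R n (fdelta R (False, y)) = (\<lambda>_. \<zero>\<^bsub>R\<^esub>)"
  by (auto simp: dPc_def fdelta_def)

lemma dPc_lin:
  fixes R (structure)
  assumes rR: "ring R"
  shows "dPc R n \<in> lin_hom R (Pc R N n) (Pc R N (n - 1))"
proof -
  interpret ring R by fact
  show ?thesis
  proof (rule lin_homI)
    fix w assume w: "w \<in> carrier (Pc R N n)"
    then have w': "w \<in> carrier (fmod R (Pb N n))" by (simp add: Pc_def)
    have "{p. dPc R n w p \<noteq> \<zero>} \<subseteq> (\<lambda>p. (False, snd p)) ` {p. w p \<noteq> \<zero>}"
    proof
      fix p assume "p \<in> {p. dPc R n w p \<noteq> \<zero>}"
      then have "\<not> fst p" "w (True, snd p) \<noteq> \<zero>" by (auto simp: dPc_def split: if_splits)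
      then show "p \<in> (\<lambda>p. (False, snd p)) ` {p. w p \<noteq> \<zero>}"
        by (intro image_eqI[of _ _ "(True, snd p)"]) (auto intro: prod_eqI)
    qed
    then have fin: "finite {p. dPc R n w p \<noteq> \<zero>}"
      using fmod_carrierD(3)[OF w'] by (meson finite_imageI finite_subset)
    show "dPc R n w \<in> carrier (Pc R N (n - 1))"
      unfolding Pc_def
    proof (rule fmod_carrierI)
      fix p show "dPc R n w p \<in> carrier R" using fmod_carrierD(1)[OF w'] by (simp add: dPc_def)
    next
      fix p assume p: "p \<notin> Pb N (n - 1)"
      show "dPc R n w p = \<zero>"
      proof (cases "fst p")
        case False
        then have "(True, snd p) \<notin> Pb N n" using p by (cases p) (auto simp: Pb_def)
        then show ?thesis using fmod_carrierD(2)[OF w'] False by (simp add: dPc_def)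
      qed (simp add: dPc_def)
    qed (rule fin)
  next
    fix v w assume "v \<in> carrier (Pc R N n)" "w \<in> carrier (Pc R N n)"
    then show "dPc R n (v \<oplus>\<^bsub>Pc R N n\<^esub> w) = dPc R n v \<oplus>\<^bsub>Pc R N (n - 1)\<^esub> dPc R n w"
      by (auto simp: Pc_def fmod_simps dPc_def)
  next
    fix r w assume "r \<in> carrier R" "w \<in> carrier (Pc R N n)"
    then show "dPc R n (r \<odot>\<^bsub>Pc R N n\<^esub> w) = r \<odot>\<^bsub>Pc R N (n - 1)\<^esub> dPc R n w"
      by (auto simp: Pc_def fmod_simps dPc_def)
  qed
qed

lemma Pc_complex:
  assumes rR: "ring R"
  shows "is_complex R (Pc R N) (dPc R)"
  unfolding is_complex_def
proof (intro conjI allI ballI)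
  fix n show "left_module R (Pc R N n)"
    unfolding Pc_def by (rule lmod_left_module[OF lmod_fmod[OF rR]])
next
  fix n show "dPc R n \<in> lin_hom R (Pc R N n) (Pc R N (n - 1))" by (rule dPc_lin[OF rR])
next
  fix n x assume "x \<in> carrier (Pc R N n)"
  show "dPc R (n - 1) (dPc R n x) = \<zero>\<^bsub>Pc R N (n - 2)\<^esub>"
    by (auto simp: dPc_def Pc_def fmod_simps)
qed

lemma lmod_Pc: "ring R \<Longrightarrow> lmod R (Pc R N n)"
  unfolding Pc_def by (rule lmod_fmod)

lemma fdelta_Pc_T: "ring R \<Longrightarrow> y \<in> carrier (N n) \<Longrightarrow> fdelta R (True, y) \<in> carrier (Pc R N n)"
  unfolding Pc_def by (rule fdelta_carrier) (auto simp: Pb_def)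

lemma fdelta_Pc_F: "ring R \<Longrightarrow> y \<in> carrier (N (n + 1)) \<Longrightarrow> fdelta R (False, y) \<in> carrier (Pc R N n)"
  unfolding Pc_def by (rule fdelta_carrier) (auto simp: Pb_def)

lemma Pb_cases: "p \<in> Pb N n \<Longrightarrow> (\<And>y. p = (True, y) \<Longrightarrow> y \<in> carrier (N n) \<Longrightarrow> P) \<Longrightarrow>
   (\<And>y. p = (False, y) \<Longrightarrow> y \<in> carrier (N (n + 1)) \<Longrightarrow> P) \<Longrightarrow> P"
  by (auto simp: Pb_def)

lemma Pc_eq:
  assumes rR: "ring R" and X: "lmod R X"
    and phi: "\<phi> \<in> lin_hom R (Pc R N n) X" and psi: "\<psi> \<in> lin_hom R (Pc R N n) X"
    and T: "\<And>y. y \<in> carrier (N n) \<Longrightarrow> \<phi> (fdelta R (True, y)) = \<psi> (fdelta R (True, y))"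
    and F: "\<And>y. y \<in> carrier (N (n + 1)) \<Longrightarrow> \<phi> (fdelta R (False, y)) = \<psi> (fdelta R (False, y))"
    and w: "w \<in> carrier (Pc R N n)"
  shows "\<phi> w = \<psi> w"
proof -
  have phi': "\<phi> \<in> lin_hom R (fmod R (Pb N n)) X" using phi by (simp add: Pc_def)
  have psi': "\<psi> \<in> lin_hom R (fmod R (Pb N n)) X" using psi by (simp add: Pc_def)
  have w': "w \<in> carrier (fmod R (Pb N n))" using w by (simp add: Pc_def)
  show ?thesis
  proof (rule lin_fmod_eq[OF rR X phi' psi' _ w'])
    fix p assume p: "p \<in> Pb N n"
    obtain t y where p': "p = (t, y)" by (cases p)
    show "\<phi> (fdelta R p) = \<psi> (fdelta R p)"
    proof (cases t)
      case True
      then have "y \<in> carrier (N n)" using p p' by (auto simp: Pb_def)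
      then show ?thesis using T True p' by simp
    next
      case False
      then have "y \<in> carrier (N (n + 1))" using p p' by (auto simp: Pb_def)
      then show ?thesis using F False p' by simp
    qed
  qed
qed

lemma hPc_lin:
  assumes N: "is_complex R N dN"
  shows "hPc R N dN n \<in> lin_hom R (Pc R N n) (N n)"
proof -
  have rR: "ring R" by (rule cx_ring[OF N])
  show ?thesis unfolding hPc_def Pc_def
  proof (rule ext_lin[OF rR cx_lmod[OF N]])
    fix p assume "p \<in> Pb N n"
    then show "(if fst p then snd p else dN (n + 1) (snd p)) \<in> carrier (N n)"
      using lin_homD(1)[OF cx_d[OF N, of "n + 1"]] by (auto simp: Pb_def)
  qed
qed

lemma hPc_T:
  assumes N: "is_complex R N dN" and y: "y \<in> carrier (N n)"
  shows "hPc R N dN n (fdelta R (True, y)) = y"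
proof -
  have p: "(True, y) \<in> Pb N n" using y by (simp add: Pb_def)
  have "ext R (N n) (\<lambda>p. if fst p then snd p else dN (n + 1) (snd p)) (fdelta R (True, y))
      = (\<lambda>p. if fst p then snd p else dN (n + 1) (snd p)) (True, y)"
    by (rule ext_delta[OF cx_ring[OF N] cx_lmod[OF N] p]) (simp add: y)
  then show ?thesis by (simp add: hPc_def)
qed

lemma hPc_F:
  assumes N: "is_complex R N dN" and y: "y \<in> carrier (N (n + 1))"
  shows "hPc R N dN n (fdelta R (False, y)) = dN (n + 1) y"
proof -
  have p: "(False, y) \<in> Pb N n" using y by (simp add: Pb_def)
  have "ext R (N n) (\<lambda>p. if fst p then snd p else dN (n + 1) (snd p)) (fdelta R (False, y))
      = (\<lambda>p. if fst p then snd p else dN (n + 1) (snd p)) (False, y)"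
    by (rule ext_delta[OF cx_ring[OF N] cx_lmod[OF N] p])
       (use lin_homD(1)[OF cx_d[OF N, of "n + 1"] y] in simp)
  then show ?thesis by (simp add: hPc_def)
qed

lemma hPc_morph:
  assumes N: "is_complex R N dN"
  shows "cx_morphism R (Pc R N) (dPc R) N dN (hPc R N dN)"
  unfolding cx_morphism_def
proof (intro allI conjI ballI)
  have rR: "ring R" by (rule cx_ring[OF N])
  fix n
  show "hPc R N dN n \<in> lin_hom R (Pc R N n) (N n)" by (rule hPc_lin[OF N])
  fix w assume w: "w \<in> carrier (Pc R N n)"
  show "dN n (hPc R N dN n w) = hPc R N dN (n - 1) (dPc R n w)"
  proof (rule Pc_eq[OF rR cx_lmod[OF N] _ _ _ _ w])
    show "(\<lambda>w. dN n (hPc R N dN n w)) \<in> lin_hom R (Pc R N n) (N (n - 1))"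
      by (rule lin_hom_comp[OF hPc_lin[OF N] cx_d[OF N]])
    show "(\<lambda>w. hPc R N dN (n - 1) (dPc R n w)) \<in> lin_hom R (Pc R N n) (N (n - 1))"
      by (rule lin_hom_comp[OF dPc_lin[OF rR] hPc_lin[OF N]])
  next
    fix y assume y: "y \<in> carrier (N n)"
    have y': "y \<in> carrier (N (n - 1 + 1))" using y by simp
    show "dN n (hPc R N dN n (fdelta R (True, y))) = hPc R N dN (n - 1) (dPc R n (fdelta R (True, y)))"
      using hPc_T[OF N y] hPc_F[OF N y'] by (simp add: dPc_delta_T)
  next
    fix y assume y: "y \<in> carrier (N (n + 1))"
    have z: "(\<lambda>_. \<zero>\<^bsub>R\<^esub>) = \<zero>\<^bsub>Pc R N (n - 1)\<^esub>" by (simp add: Pc_def fmod_simps)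
    have "hPc R N dN (n - 1) (\<zero>\<^bsub>Pc R N (n - 1)\<^esub>) = \<zero>\<^bsub>N (n - 1)\<^esub>"
      by (rule lin_hom_zero[OF lmod_Pc[OF rR] cx_lmod[OF N] hPc_lin[OF N]])
    then show "dN n (hPc R N dN n (fdelta R (False, y))) = hPc R N dN (n - 1) (dPc R n (fdelta R (False, y)))"
      using hPc_F[OF N y] cx_dd[OF N y] by (simp add: dPc_delta_F z)
  qed
qed

lemma Pc_lift:
  assumes rR: "ring R" and X: "is_complex R X dX" and Y: "is_complex R Y dY"
    and g: "cx_morphism R X dX Y dY g" and sj: "\<forall>n. g n ` carrier (X n) = carrier (Y n)"
    and h: "cx_morphism R (Pc R N) (dPc R) Y dY h"
  shows "\<exists>k. cx_morphism R (Pc R N) (dPc R) X dX k \<and> (\<forall>n. \<forall>x\<in>carrier (Pc R N n). g n (k n x) = h n x)"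
proof -
  define Lf where "Lf n y = (SOME \<xi>. \<xi> \<in> carrier (X n) \<and> g n \<xi> = h n (fdelta R (True, y)))" for n y
  have Lf: "\<And>n y. y \<in> carrier (N n) \<Longrightarrow> Lf n y \<in> carrier (X n) \<and> g n (Lf n y) = h n (fdelta R (True, y))"
  proof -
    fix n y assume y: "y \<in> carrier (N n)"
    have "h n (fdelta R (True, y)) \<in> carrier (Y n)"
      by (rule lin_homD(1)[OF cxm_lin[OF h] fdelta_Pc_T[where N=N and n=n, OF rR y]])
    then obtain \<xi> where "\<xi> \<in> carrier (X n)" "g n \<xi> = h n (fdelta R (True, y))"
      using sj by (metis imageE)
    then show "Lf n y \<in> carrier (X n) \<and> g n (Lf n y) = h n (fdelta R (True, y))"
      unfolding Lf_def by (intro someI[where P="\<lambda>\<xi>. \<xi> \<in> carrier (X n) \<and> g n \<xi> = h n (fdelta R (True, y))"]) simp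
  qed
  define K where "K n = (\<lambda>p. if fst p then Lf n (snd p) else dX (n + 1) (Lf (n + 1) (snd p)))" for n
  define k where "k n = ext R (X n) (K n)" for n
  have KX: "\<And>n p. p \<in> Pb N n \<Longrightarrow> K n p \<in> carrier (X n)"
  proof -
    fix n p assume p: "p \<in> Pb N n"
    show "K n p \<in> carrier (X n)"
    proof (cases "fst p")
      case True
      then show ?thesis using p Lf by (auto simp: K_def Pb_def)
    next
      case False
      then have "snd p \<in> carrier (N (n + 1))" using p by (auto simp: Pb_def)
      then have "Lf (n + 1) (snd p) \<in> carrier (X (n + 1))" using Lf by blast
      then show ?thesis using False lin_homD(1)[OF cx_d[OF X, of "n + 1"]] by (simp add: K_def)
    qed
  qed
  have klin: "\<And>n. k n \<in> lin_hom R (Pc R N n) (X n)"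
    unfolding k_def Pc_def by (rule ext_lin[OF rR cx_lmod[OF X] KX])
  have kT: "\<And>n y. y \<in> carrier (N n) \<Longrightarrow> k n (fdelta R (True, y)) = Lf n y"
  proof -
    fix n y assume y: "y \<in> carrier (N n)"
    have p: "(True, y) \<in> Pb N n" using y by (simp add: Pb_def)
    show "k n (fdelta R (True, y)) = Lf n y"
      unfolding k_def using ext_delta[where L="K n", OF rR cx_lmod[OF X, of n] p KX[OF p]] by (simp add: K_def)
  qed
  have kF: "\<And>n y. y \<in> carrier (N (n + 1)) \<Longrightarrow> k n (fdelta R (False, y)) = dX (n + 1) (Lf (n + 1) y)"
  proof -
    fix n y assume y: "y \<in> carrier (N (n + 1))"
    have p: "(False, y) \<in> Pb N n" using y by (simp add: Pb_def)
    show "k n (fdelta R (False, y)) = dX (n + 1) (Lf (n + 1) y)"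
      unfolding k_def using ext_delta[where L="K n", OF rR cx_lmod[OF X, of n] p KX[OF p]] by (simp add: K_def)
  qed
  have gk: "\<forall>n. \<forall>x\<in>carrier (Pc R N n). g n (k n x) = h n x"
  proof (intro allI ballI)
    fix n w assume w: "w \<in> carrier (Pc R N n)"
    show "g n (k n w) = h n w"
    proof (rule Pc_eq[OF rR cx_lmod[OF Y, of n] lin_hom_comp[OF klin cxm_lin[OF g]] cxm_lin[OF h] _ _ w])
      fix y assume y: "y \<in> carrier (N n)"
      show "g n (k n (fdelta R (True, y))) = h n (fdelta R (True, y))" using kT[OF y] Lf[OF y] by simp
    next
      fix y assume y: "y \<in> carrier (N (n + 1))"
      have L: "Lf (n + 1) y \<in> carrier (X (n + 1))" "g (n + 1) (Lf (n + 1) y) = h (n + 1) (fdelta R (True, y))"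
        using Lf[OF y] by auto
      have "g n (dX (n + 1) (Lf (n + 1) y)) = dY (n + 1) (g (n + 1) (Lf (n + 1) y))"
        using cxm_comm[OF g L(1)] by simp
      also have "\<dots> = dY (n + 1) (h (n + 1) (fdelta R (True, y)))" using L(2) by simp
      also have "\<dots> = h n (dPc R (n + 1) (fdelta R (True, y)))"
        using cxm_comm[OF h fdelta_Pc_T[where N=N and n="n + 1", OF rR y]] by simp
      also have "\<dots> = h n (fdelta R (False, y))" by (simp add: dPc_delta_T)
      finally show "g n (k n (fdelta R (False, y))) = h n (fdelta R (False, y))" using kF[OF y] by simp
    qed
  qed
  have km: "cx_morphism R (Pc R N) (dPc R) X dX k"
    unfolding cx_morphism_def
  proof (intro allI conjI ballI)
    fix n
    show "k n \<in> lin_hom R (Pc R N n) (X n)" by (rule klin)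
    fix w assume w: "w \<in> carrier (Pc R N n)"
    show "dX n (k n w) = k (n - 1) (dPc R n w)"
    proof (rule Pc_eq[OF rR cx_lmod[OF X, of "n - 1"] lin_hom_comp[OF klin cx_d[OF X]] lin_hom_comp[OF dPc_lin[OF rR] klin] _ _ w])
      fix y assume y: "y \<in> carrier (N n)"
      have y': "y \<in> carrier (N (n - 1 + 1))" using y by simp
      show "dX n (k n (fdelta R (True, y))) = k (n - 1) (dPc R n (fdelta R (True, y)))"
        using kT[OF y] kF[OF y'] by (simp add: dPc_delta_T)
    next
      fix y assume y: "y \<in> carrier (N (n + 1))"
      have L: "Lf (n + 1) y \<in> carrier (X (n + 1))" using Lf[OF y] by auto
      have z: "(\<lambda>_. \<zero>\<^bsub>R\<^esub>) = \<zero>\<^bsub>Pc R N (n - 1)\<^esub>" by (simp add: Pc_def fmod_simps)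
      have "k (n - 1) (\<zero>\<^bsub>Pc R N (n - 1)\<^esub>) = \<zero>\<^bsub>X (n - 1)\<^esub>"
        by (rule lin_hom_zero[OF lmod_Pc[OF rR] cx_lmod[OF X] klin])
      then show "dX n (k n (fdelta R (False, y))) = k (n - 1) (dPc R n (fdelta R (False, y)))"
        using kF[OF y] cx_dd[OF X L] by (simp add: dPc_delta_F z)
    qed
  qed
  show ?thesis using km gk by blast
qed

lemma Pc_proj:
  assumes rR: "ring R"
  shows "projective_complex R (Pc R N) (dPc R)"
  unfolding projective_complex_def
proof (intro conjI allI impI)
  show "is_complex R (Pc R N) (dPc R)" by (rule Pc_complex[OF rR])
next
  fix X :: "int \<Rightarrow> ('a, bool \<times> (bool \<times> 'b \<Rightarrow> 'a) \<Rightarrow> 'a) module" and dX Y dY g h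
  assume A: "is_complex R X dX \<and> is_complex R Y dY \<and> cx_morphism R X dX Y dY g
       \<and> (\<forall>n. g n ` carrier (X n) = carrier (Y n)) \<and> cx_morphism R (Pc R N) (dPc R) Y dY h"
  show "\<exists>k. cx_morphism R (Pc R N) (dPc R) X dX k \<and> (\<forall>n. \<forall>x\<in>carrier (Pc R N n). g n (k n x) = h n x)"
    using A by (elim conjE) (rule Pc_lift[OF rR])
qed

definition betaN :: "'r ring \<Rightarrow> (int \<Rightarrow> ('r, 'n) module) \<Rightarrow> int \<Rightarrow> ('n \<Rightarrow> 'r) \<Rightarrow> 'n" where
  "betaN R N n = ext R (N n) (\<lambda>y. y)"

lemma beta_lin: "is_complex R N dN \<Longrightarrow> betaN R N n \<in> lin_hom R (fmod R (carrier (N n))) (N n)"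
  unfolding betaN_def by (rule ext_lin[OF cx_ring cx_lmod]) auto

lemma beta_delta: "is_complex R N dN \<Longrightarrow> y \<in> carrier (N n) \<Longrightarrow> betaN R N n (fdelta R y) = y"
  unfolding betaN_def by (rule ext_delta[OF cx_ring cx_lmod, where L="\<lambda>y. y"])

lemma beta_zero:
  assumes N: "is_complex R N dN"
  shows "betaN R N n (\<lambda>_. \<zero>\<^bsub>R\<^esub>) = \<zero>\<^bsub>N n\<^esub>"
proof -
  have "betaN R N n \<zero>\<^bsub>fmod R (carrier (N n))\<^esub> = \<zero>\<^bsub>N n\<^esub>"
    by (rule lin_hom_zero[OF lmod_fmod[OF cx_ring[OF N]] cx_lmod[OF N] beta_lin[OF N]])
  then show ?thesis by (simp add: fmod_simps)
qed

definition gPc :: "'r ring \<Rightarrow> (int \<Rightarrow> 'm \<Rightarrow> 'm) \<Rightarrow> (int \<Rightarrow> 'm \<Rightarrow> 'n \<Rightarrow> 'r) \<Rightarrow> int \<Rightarrow> 'm \<Rightarrow> (bool \<times> 'n \<Rightarrow> 'r)" where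
  "gPc R dM H n x = (\<lambda>p. if fst p then H (n - 1) (dM n x) (snd p) else H n x (snd p))"

lemma gPc_morph:
  fixes R (structure)
  assumes M: "is_complex R M dM" and N: "is_complex R N dN"
    and H: "\<And>n. H n \<in> lin_hom R (M n) (fmod R (carrier (N (n + 1))))"
  shows "cx_morphism R M dM (Pc R N) (dPc R) (gPc R dM H)"
  unfolding cx_morphism_def
proof (intro allI conjI ballI)
  have rR: "ring R" by (rule cx_ring[OF M])
  interpret ring R by (rule rR)
  fix n
  have H1: "H (n - 1) \<in> lin_hom R (M (n - 1)) (fmod R (carrier (N n)))" using H[of "n - 1"] by simp
  show "gPc R dM H n \<in> lin_hom R (M n) (Pc R N n)"
  proof (rule lin_homI)
    fix x assume x: "x \<in> carrier (M n)"
    have u: "H (n - 1) (dM n x) \<in> carrier (fmod R (carrier (N n)))"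
      by (rule lin_homD(1)[OF H1 lin_homD(1)[OF cx_d[OF M] x]])
    have v: "H n x \<in> carrier (fmod R (carrier (N (n + 1))))"
      by (rule lin_homD(1)[OF H x])
    have "{p. gPc R dM H n x p \<noteq> \<zero>} \<subseteq> Pair True ` {y. H (n - 1) (dM n x) y \<noteq> \<zero>} \<union> Pair False ` {y. H n x y \<noteq> \<zero>}"
    proof
      fix p assume "p \<in> {p. gPc R dM H n x p \<noteq> \<zero>}"
      then show "p \<in> Pair True ` {y. H (n - 1) (dM n x) y \<noteq> \<zero>} \<union> Pair False ` {y. H n x y \<noteq> \<zero>}"
        by (cases p) (auto simp: gPc_def split: if_splits)
    qed
    moreover have "finite (Pair True ` {y. H (n - 1) (dM n x) y \<noteq> \<zero>} \<union> Pair False ` {y. H n x y \<noteq> \<zero>})"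
      using fmod_carrierD(3)[OF u] fmod_carrierD(3)[OF v] by simp
    ultimately have fin: "finite {p. gPc R dM H n x p \<noteq> \<zero>}" by (rule finite_subset)
    show "gPc R dM H n x \<in> carrier (Pc R N n)"
      unfolding Pc_def
    proof (rule fmod_carrierI[OF _ _ fin])
      fix p show "gPc R dM H n x p \<in> carrier R"
        using fmod_carrierD(1)[OF u] fmod_carrierD(1)[OF v] by (simp add: gPc_def)
    next
      fix p assume p: "p \<notin> Pb N n"
      obtain t y where p': "p = (t, y)" by (cases p)
      show "gPc R dM H n x p = \<zero>"
      proof (cases t)
        case True
        then have "y \<notin> carrier (N n)" using p p' by (auto simp: Pb_def)
        then show ?thesis using fmod_carrierD(2)[OF u] True p' by (simp add: gPc_def)
      next
        case False
        then have "y \<notin> carrier (N (n + 1))" using p p' by (auto simp: Pb_def)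
        then show ?thesis using fmod_carrierD(2)[OF v] False p' by (simp add: gPc_def)
      qed
    qed
  next
    fix x x' assume x: "x \<in> carrier (M n)" and x': "x' \<in> carrier (M n)"
    have d: "dM n (x \<oplus>\<^bsub>M n\<^esub> x') = dM n x \<oplus>\<^bsub>M (n - 1)\<^esub> dM n x'"
      by (rule lin_homD(2)[OF cx_d[OF M] x x'])
    have e1: "H (n - 1) (dM n (x \<oplus>\<^bsub>M n\<^esub> x')) = H (n - 1) (dM n x) \<oplus>\<^bsub>fmod R (carrier (N n))\<^esub> H (n - 1) (dM n x')"
      unfolding d by (rule lin_homD(2)[OF H1 lin_homD(1)[OF cx_d[OF M] x] lin_homD(1)[OF cx_d[OF M] x']])
    have e2: "H n (x \<oplus>\<^bsub>M n\<^esub> x') = H n x \<oplus>\<^bsub>fmod R (carrier (N (n + 1)))\<^esub> H n x'"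
      by (rule lin_homD(2)[OF H x x'])
    show "gPc R dM H n (x \<oplus>\<^bsub>M n\<^esub> x') = gPc R dM H n x \<oplus>\<^bsub>Pc R N n\<^esub> gPc R dM H n x'"
      by (rule ext) (simp add: gPc_def Pc_def fmod_simps e1 e2)
  next
    fix r x assume r: "r \<in> carrier R" and x: "x \<in> carrier (M n)"
    have d: "dM n (r \<odot>\<^bsub>M n\<^esub> x) = r \<odot>\<^bsub>M (n - 1)\<^esub> dM n x"
      by (rule lin_homD(3)[OF cx_d[OF M] r x])
    have e1: "H (n - 1) (dM n (r \<odot>\<^bsub>M n\<^esub> x)) = r \<odot>\<^bsub>fmod R (carrier (N n))\<^esub> H (n - 1) (dM n x)"
      unfolding d by (rule lin_homD(3)[OF H1 r lin_homD(1)[OF cx_d[OF M] x]])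
    have e2: "H n (r \<odot>\<^bsub>M n\<^esub> x) = r \<odot>\<^bsub>fmod R (carrier (N (n + 1)))\<^esub> H n x"
      by (rule lin_homD(3)[OF H r x])
    show "gPc R dM H n (r \<odot>\<^bsub>M n\<^esub> x) = r \<odot>\<^bsub>Pc R N n\<^esub> gPc R dM H n x"
      by (rule ext) (simp add: gPc_def Pc_def fmod_simps e1 e2)
  qed
  fix x assume x: "x \<in> carrier (M n)"
  have H2: "H (n - 2) \<in> lin_hom R (M (n - 2)) (fmod R (carrier (N (n - 1))))" using H[of "n - 2"] by simp
  have z: "H (n - 2) (\<zero>\<^bsub>M (n - 2)\<^esub>) = \<zero>\<^bsub>fmod R (carrier (N (n - 1)))\<^esub>"
    by (rule lin_hom_zero[OF cx_lmod[OF M] lmod_fmod[OF rR] H2])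
  have dd: "dM (n - 1) (dM n x) = \<zero>\<^bsub>M (n - 2)\<^esub>" by (rule cx_dd'[OF M x])
  show "dPc R n (gPc R dM H n x) = gPc R dM H (n - 1) (dM n x)"
  proof (rule ext)
    fix p
    show "dPc R n (gPc R dM H n x) p = gPc R dM H (n - 1) (dM n x) p"
    proof (cases "fst p")
      case True
      have "H (n - 1 - 1) (dM (n - 1) (dM n x)) = (\<lambda>_. \<zero>)"
        using z dd by (simp add: fmod_simps)
      then show ?thesis using True by (simp add: dPc_def gPc_def)
    next
      case False
      then show ?thesis by (simp add: dPc_def gPc_def)
    qed
  qed
qed

lemma proj_lin:
  assumes rR: "ring R"
  shows "(\<lambda>w y. w (t, y)) \<in> lin_hom R (Pc R N n) (fmod R (carrier (N (if t then n else n + 1))))"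
proof (rule lin_homI)
  interpret ring R by fact
  fix w assume w: "w \<in> carrier (Pc R N n)"
  then have w': "w \<in> carrier (fmod R (Pb N n))" by (simp add: Pc_def)
  have "{y. w (t, y) \<noteq> \<zero>\<^bsub>R\<^esub>} \<subseteq> snd ` {p. w p \<noteq> \<zero>\<^bsub>R\<^esub>}" by force
  then have fin: "finite {y. w (t, y) \<noteq> \<zero>\<^bsub>R\<^esub>}"
    using fmod_carrierD(3)[OF w'] by (meson finite_imageI finite_subset)
  show "(\<lambda>y. w (t, y)) \<in> carrier (fmod R (carrier (N (if t then n else n + 1))))"
  proof (rule fmod_carrierI[OF _ _ fin])
    fix y show "w (t, y) \<in> carrier R" by (rule fmod_carrierD(1)[OF w'])
  next
    fix y assume "y \<notin> carrier (N (if t then n else n + 1))"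
    then have "(t, y) \<notin> Pb N n" by (cases t) (auto simp: Pb_def)
    then show "w (t, y) = \<zero>\<^bsub>R\<^esub>" by (rule fmod_carrierD(2)[OF w'])
  qed
next
  fix v w assume "v \<in> carrier (Pc R N n)" "w \<in> carrier (Pc R N n)"
  then show "(\<lambda>y. (v \<oplus>\<^bsub>Pc R N n\<^esub> w) (t, y)) = (\<lambda>y. v (t, y)) \<oplus>\<^bsub>fmod R (carrier (N (if t then n else n + 1)))\<^esub> (\<lambda>y. w (t, y))"
    by (simp add: Pc_def fmod_simps)
next
  fix r w assume "r \<in> carrier R" "w \<in> carrier (Pc R N n)"
  then show "(\<lambda>y. (r \<odot>\<^bsub>Pc R N n\<^esub> w) (t, y)) = r \<odot>\<^bsub>fmod R (carrier (N (if t then n else n + 1)))\<^esub> (\<lambda>y. w (t, y))"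
    by (simp add: Pc_def fmod_simps)
qed

lemma hPc_decomp:
  assumes N: "is_complex R N dN" and w: "w \<in> carrier (Pc R N n)"
  shows "hPc R N dN n w = betaN R N n (\<lambda>y. w (True, y)) \<oplus>\<^bsub>N n\<^esub> dN (n + 1) (betaN R N (n + 1) (\<lambda>y. w (False, y)))"
proof -
  have rR: "ring R" by (rule cx_ring[OF N])
  interpret Nn: lmod R "N n" by (rule cx_lmod[OF N])
  have pT: "(\<lambda>w y. w (True, y)) \<in> lin_hom R (Pc R N n) (fmod R (carrier (N n)))"
    using proj_lin[OF rR, of True N n] by simp
  have pF: "(\<lambda>w y. w (False, y)) \<in> lin_hom R (Pc R N n) (fmod R (carrier (N (n + 1))))"
    using proj_lin[OF rR, of False N n] by simp
  have l1: "(\<lambda>w. betaN R N n (\<lambda>y. w (True, y))) \<in> lin_hom R (Pc R N n) (N n)"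
    by (rule lin_hom_comp[OF pT beta_lin[OF N]])
  have dN1: "dN (n + 1) \<in> lin_hom R (N (n + 1)) (N n)" using cx_d[OF N, of "n + 1"] by simp
  have l2: "(\<lambda>w. dN (n + 1) (betaN R N (n + 1) (\<lambda>y. w (False, y)))) \<in> lin_hom R (Pc R N n) (N n)"
    by (rule lin_hom_comp[OF lin_hom_comp[OF pF beta_lin[OF N]] dN1])
  have l: "(\<lambda>w. betaN R N n (\<lambda>y. w (True, y)) \<oplus>\<^bsub>N n\<^esub> dN (n + 1) (betaN R N (n + 1) (\<lambda>y. w (False, y))))
      \<in> lin_hom R (Pc R N n) (N n)"
    by (rule lin_hom_add[OF cx_lmod[OF N] l1 l2])
  have bz: "\<And>k. betaN R N k (\<lambda>_. \<zero>\<^bsub>R\<^esub>) = \<zero>\<^bsub>N k\<^esub>" by (rule beta_zero[OF N])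
  have dz: "dN (n + 1) \<zero>\<^bsub>N (n + 1)\<^esub> = \<zero>\<^bsub>N n\<^esub>"
    by (rule lin_hom_zero[OF cx_lmod[OF N] cx_lmod[OF N] dN1])
  show ?thesis
  proof (rule Pc_eq[OF rR cx_lmod[OF N, of n] hPc_lin[OF N] l _ _ w])
    fix y assume y: "y \<in> carrier (N n)"
    have a: "(\<lambda>y'. fdelta R (True, y) (True, y')) = fdelta R y" by (auto simp: fdelta_def)
    have b: "(\<lambda>y'. fdelta R (True, y) (False, y')) = (\<lambda>_. \<zero>\<^bsub>R\<^esub>)" by (auto simp: fdelta_def)
    show "hPc R N dN n (fdelta R (True, y)) = betaN R N n (\<lambda>y'. fdelta R (True, y) (True, y'))
        \<oplus>\<^bsub>N n\<^esub> dN (n + 1) (betaN R N (n + 1) (\<lambda>y'. fdelta R (True, y) (False, y')))"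
      unfolding a b using hPc_T[OF N y] beta_delta[OF N y] bz dz y by simp
  next
    fix y assume y: "y \<in> carrier (N (n + 1))"
    have a: "(\<lambda>y'. fdelta R (False, y) (True, y')) = (\<lambda>_. \<zero>\<^bsub>R\<^esub>)" by (auto simp: fdelta_def)
    have b: "(\<lambda>y'. fdelta R (False, y) (False, y')) = fdelta R y" by (auto simp: fdelta_def)
    have dy: "dN (n + 1) y \<in> carrier (N n)" by (rule lin_homD(1)[OF dN1 y])
    show "hPc R N dN n (fdelta R (False, y)) = betaN R N n (\<lambda>y'. fdelta R (False, y) (True, y'))
        \<oplus>\<^bsub>N n\<^esub> dN (n + 1) (betaN R N (n + 1) (\<lambda>y'. fdelta R (False, y) (False, y')))"
      unfolding a b using hPc_F[OF N y] beta_delta[OF N y] bz dy by simp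
  qed
qed

lemma hg_eq:
  assumes M: "is_complex R M dM" and N: "is_complex R N dN"
    and H: "\<And>n. H n \<in> lin_hom R (M n) (fmod R (carrier (N (n + 1))))"
    and hom: "\<And>n x. x \<in> carrier (M n) \<Longrightarrow>
        f n x = dN (n + 1) (betaN R N (n + 1) (H n x)) \<oplus>\<^bsub>N n\<^esub> betaN R N n (H (n - 1) (dM n x))"
    and x: "x \<in> carrier (M n)"
  shows "hPc R N dN n (gPc R dM H n x) = f n x"
proof -
  interpret Nn: lmod R "N n" by (rule cx_lmod[OF N])
  have g: "gPc R dM H n x \<in> carrier (Pc R N n)"
    by (rule lin_homD(1)[OF cxm_lin[OF gPc_morph[OF M N H]] x])
  have e1: "(\<lambda>y. gPc R dM H n x (True, y)) = H (n - 1) (dM n x)" by (simp add: gPc_def)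
  have e2: "(\<lambda>y. gPc R dM H n x (False, y)) = H n x" by (simp add: gPc_def)
  have H1: "H (n - 1) \<in> lin_hom R (M (n - 1)) (fmod R (carrier (N n)))" using H[of "n - 1"] by simp
  have c1: "betaN R N n (H (n - 1) (dM n x)) \<in> carrier (N n)"
    by (rule lin_homD(1)[OF beta_lin[OF N] lin_homD(1)[OF H1 lin_homD(1)[OF cx_d[OF M] x]]])
  have dN1: "dN (n + 1) \<in> lin_hom R (N (n + 1)) (N n)" using cx_d[OF N, of "n + 1"] by simp
  have c2: "dN (n + 1) (betaN R N (n + 1) (H n x)) \<in> carrier (N n)"
    by (rule lin_homD(1)[OF dN1 lin_homD(1)[OF beta_lin[OF N] lin_homD(1)[OF H x]]])
  show ?thesis
    unfolding hPc_decomp[OF N g] e1 e2 hom[OF x] using c1 c2 by (rule Nn.a_comm)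
qed


lemma lin_hom_cycles: "h \<in> lin_hom R X (cycles N d n) \<Longrightarrow> h \<in> lin_hom R X (N n)"
  unfolding lin_hom_def cycles_def by auto

lemma lin_hom_to_cycles:
  assumes "h \<in> lin_hom R X (N n)" and "\<And>x. x \<in> carrier X \<Longrightarrow> d n (h x) = \<zero>\<^bsub>N (n - 1)\<^esub>"
  shows "h \<in> lin_hom R X (cycles N d n)"
  using assms unfolding lin_hom_def cycles_def by auto

lemma flat_cx_complex: "flat_complex R N dN \<Longrightarrow> is_complex R N dN"
  by (simp add: flat_complex_def exact_complex_def)

lemma lift_exists:
  assumes N: "flat_complex R N dN" and Mm: "lmod R Mm" and fp: "fin_presented R Mm"
    and g: "\<gamma> \<in> lin_hom R Mm (N m)" and gz: "\<And>x. x \<in> carrier Mm \<Longrightarrow> dN m (\<gamma> x) = \<zero>\<^bsub>N (m - 1)\<^esub>"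
  shows "\<exists>H. H \<in> lin_hom R Mm (fmod R (carrier (N (m + 1))))
     \<and> (\<forall>x\<in>carrier Mm. dN (m + 1) (betaN R N (m + 1) (H x)) = \<gamma> x)"
proof -
  have NC: "is_complex R N dN" by (rule flat_cx_complex[OF N])
  have rR: "ring R" by (rule cx_ring[OF NC])
  have flatZ: "flat_module R (cycles N dN m)" using N by (simp add: flat_complex_def)
  have exact: "carrier (cycles N dN m) = dN (m + 1) ` carrier (N (m + 1))"
    using N by (simp add: flat_complex_def exact_complex_def)
  have gZ: "\<gamma> \<in> lin_hom R Mm (cycles N dN m)" by (rule lin_hom_to_cycles[where N=N and n=m and d=dN and h=\<gamma>, OF g gz])
  obtain m' :: nat and bb \<rho> where bb: "bb \<in> lin_hom R Mm (fmod R {..<m'})"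
    and rho: "\<rho> \<in> lin_hom R (fmod R {..<m'}) (cycles N dN m)"
    and fac: "\<forall>x\<in>carrier Mm. \<gamma> x = \<rho> (bb x)"
    using lazard[OF rR Mm fp flatZ gZ] by blast
  have rhoN: "\<rho> \<in> lin_hom R (fmod R {..<m'}) (N m)" by (rule lin_hom_cycles[OF rho])
  define w where "w j = (SOME v. v \<in> carrier (N (m + 1)) \<and> dN (m + 1) v = \<rho> (fdelta R j))" for j
  have w: "\<And>j. j < m' \<Longrightarrow> w j \<in> carrier (N (m + 1)) \<and> dN (m + 1) (w j) = \<rho> (fdelta R j)"
  proof -
    fix j assume j: "j < m'"
    have "\<rho> (fdelta R j) \<in> carrier (cycles N dN m)"
      by (rule lin_homD(1)[OF rho fdelta_carrier[OF rR]]) (simp add: j)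
    then obtain v where "v \<in> carrier (N (m + 1))" "dN (m + 1) v = \<rho> (fdelta R j)"
      using exact by auto
    then show "w j \<in> carrier (N (m + 1)) \<and> dN (m + 1) (w j) = \<rho> (fdelta R j)"
      unfolding w_def by (intro someI[where P="\<lambda>v. v \<in> carrier (N (m + 1)) \<and> dN (m + 1) v = \<rho> (fdelta R j)"]) simp
  qed
  define E where "E = ext R (fmod R (carrier (N (m + 1)))) (\<lambda>j. fdelta R (w j))"
  have Elin: "E \<in> lin_hom R (fmod R {..<m'}) (fmod R (carrier (N (m + 1))))"
    unfolding E_def using w by (intro ext_lin[OF rR lmod_fmod[OF rR]] fdelta_carrier[OF rR]) auto
  have dN1: "dN (m + 1) \<in> lin_hom R (N (m + 1)) (N m)" using cx_d[OF NC, of "m + 1"] by simp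
  have Psi: "(\<lambda>u. dN (m + 1) (betaN R N (m + 1) (E u))) \<in> lin_hom R (fmod R {..<m'}) (N m)"
    by (rule lin_hom_comp[OF lin_hom_comp[OF Elin beta_lin[OF NC]] dN1])
  have eq: "\<And>u. u \<in> carrier (fmod R {..<m'}) \<Longrightarrow> dN (m + 1) (betaN R N (m + 1) (E u)) = \<rho> u"
  proof -
    fix u assume u: "u \<in> carrier (fmod R {..<m'})"
    show "dN (m + 1) (betaN R N (m + 1) (E u)) = \<rho> u"
    proof (rule lin_fmod_eq[OF rR cx_lmod[OF NC, of m] Psi rhoN _ u])
      fix j :: nat assume j: "j \<in> {..<m'}"
      have wj: "w j \<in> carrier (N (m + 1))" "dN (m + 1) (w j) = \<rho> (fdelta R j)" using w j by auto
      have "E (fdelta R j) = fdelta R (w j)"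
        unfolding E_def by (rule ext_delta[where L="\<lambda>j. fdelta R (w j)", OF rR lmod_fmod[OF rR] j fdelta_carrier[OF rR wj(1)]])
      then show "dN (m + 1) (betaN R N (m + 1) (E (fdelta R j))) = \<rho> (fdelta R j)"
        using beta_delta[OF NC wj(1)] wj(2) by simp
    qed
  qed
  have "(\<lambda>x. E (bb x)) \<in> lin_hom R Mm (fmod R (carrier (N (m + 1))))"
    by (rule lin_hom_comp[OF bb Elin])
  moreover have "\<forall>x\<in>carrier Mm. dN (m + 1) (betaN R N (m + 1) (E (bb x))) = \<gamma> x"
    using eq lin_homD(1)[OF bb] fac by simp
  ultimately show ?thesis by blast
qed

definition hstep :: "'r ring \<Rightarrow> (int \<Rightarrow> ('r, 'm) module) \<Rightarrow> (int \<Rightarrow> 'm \<Rightarrow> 'm) \<Rightarrow> (int \<Rightarrow> ('r, 'n) module)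
    \<Rightarrow> (int \<Rightarrow> 'n \<Rightarrow> 'n) \<Rightarrow> (int \<Rightarrow> 'm \<Rightarrow> 'n) \<Rightarrow> int \<Rightarrow> ('m \<Rightarrow> 'n \<Rightarrow> 'r) \<Rightarrow> ('m \<Rightarrow> 'n \<Rightarrow> 'r) \<Rightarrow> bool" where
  "hstep R M dM N dN f m Hp H \<longleftrightarrow> H \<in> lin_hom R (M m) (fmod R (carrier (N (m + 1))))
     \<and> (\<forall>x\<in>carrier (M m). f m x = dN (m + 1) (betaN R N (m + 1) (H x)) \<oplus>\<^bsub>N m\<^esub> betaN R N m (Hp (dM m x)))"

primrec hseq :: "'r ring \<Rightarrow> (int \<Rightarrow> ('r, 'm) module) \<Rightarrow> (int \<Rightarrow> 'm \<Rightarrow> 'm) \<Rightarrow> (int \<Rightarrow> ('r, 'n) module)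
    \<Rightarrow> (int \<Rightarrow> 'n \<Rightarrow> 'n) \<Rightarrow> (int \<Rightarrow> 'm \<Rightarrow> 'n) \<Rightarrow> int \<Rightarrow> nat \<Rightarrow> ('m \<Rightarrow> 'n \<Rightarrow> 'r)" where
  "hseq R M dM N dN f b 0 = (\<lambda>x y. \<zero>\<^bsub>R\<^esub>)"
| "hseq R M dM N dN f b (Suc k) = (SOME H. hstep R M dM N dN f (b + int (Suc k)) (hseq R M dM N dN f b k) H)"

lemma zero_map_lin:
  assumes M: "lmod R M" and rR: "ring R"
  shows "(\<lambda>x y. \<zero>\<^bsub>R\<^esub>) \<in> lin_hom R M (fmod R S)"
proof (rule lin_homI)
  interpret ring R by fact
  fix x show "(\<lambda>y. \<zero>\<^bsub>R\<^esub>) \<in> carrier (fmod R S)" by (rule fmod_carrierI) auto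
next
  interpret ring R by fact
  fix x y show "(\<lambda>y. \<zero>\<^bsub>R\<^esub>) = (\<lambda>y. \<zero>\<^bsub>R\<^esub>) \<oplus>\<^bsub>fmod R S\<^esub> (\<lambda>y. \<zero>\<^bsub>R\<^esub>)"
    by (simp add: fmod_simps)
next
  interpret ring R by fact
  fix r x assume "r \<in> carrier R"
  then show "(\<lambda>y. \<zero>\<^bsub>R\<^esub>) = r \<odot>\<^bsub>fmod R S\<^esub> (\<lambda>y. \<zero>\<^bsub>R\<^esub>)"
    by (simp add: fmod_simps)
qed

lemma hseq_inv:
  assumes M: "is_complex R M dM" and N: "flat_complex R N dN"
    and fp: "\<forall>n. fin_presented R (M n)" and f: "cx_morphism R M dM N dN f"
    and bnd: "\<forall>n\<le>b. carrier (M n) = {\<zero>\<^bsub>M n\<^esub>}"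
  shows "hstep R M dM N dN f (b + int k) (hseq R M dM N dN f b (k - 1)) (hseq R M dM N dN f b k)"
proof (induct k rule: less_induct)
  case (less k)
  have NC: "is_complex R N dN" by (rule flat_cx_complex[OF N])
  have rR: "ring R" by (rule cx_ring[OF M])
  let ?h = "hseq R M dM N dN f b"
  show ?case
  proof (cases k)
    case 0
    have lin: "?h 0 \<in> lin_hom R (M b) (fmod R (carrier (N (b + 1))))"
      by (simp add: zero_map_lin[OF cx_lmod[OF M] rR])
    have "\<forall>x\<in>carrier (M b). f b x = dN (b + 1) (betaN R N (b + 1) (?h 0 x)) \<oplus>\<^bsub>N b\<^esub> betaN R N b (?h 0 (dM b x))"
    proof
      fix x assume "x \<in> carrier (M b)"
      then have x0: "x = \<zero>\<^bsub>M b\<^esub>" using bnd by auto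
      interpret Nb: lmod R "N b" by (rule cx_lmod[OF NC])
      have f0: "f b x = \<zero>\<^bsub>N b\<^esub>" unfolding x0 by (rule lin_hom_zero[OF cx_lmod[OF M] cx_lmod[OF NC] cxm_lin[OF f]])
      have dN1: "dN (b + 1) \<in> lin_hom R (N (b + 1)) (N b)" using cx_d[OF NC, of "b + 1"] by simp
      have d0: "dN (b + 1) \<zero>\<^bsub>N (b + 1)\<^esub> = \<zero>\<^bsub>N b\<^esub>"
        by (rule lin_hom_zero[OF cx_lmod[OF NC] cx_lmod[OF NC] dN1])
      show "f b x = dN (b + 1) (betaN R N (b + 1) (?h 0 x)) \<oplus>\<^bsub>N b\<^esub> betaN R N b (?h 0 (dM b x))"
        using f0 d0 beta_zero[OF NC] by simp
    qed
    then show ?thesis using lin 0 by (simp add: hstep_def)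
  next
    case (Suc k')
    define m where "m = b + int k' + 1"
    have m1: "m - 1 = b + int k'" by (simp add: m_def)
    have mS: "b + int (Suc k') = m" by (simp add: m_def)
    let ?m = m
    have IH: "hstep R M dM N dN f (b + int k') (?h (k' - 1)) (?h k')" using less Suc by simp
    have hk_lin: "?h k' \<in> lin_hom R (M (?m - 1)) (fmod R (carrier (N ?m)))"
      using IH unfolding hstep_def m1 by (simp add: m_def)
    have hk_eq: "\<And>y. y \<in> carrier (M (?m - 1)) \<Longrightarrow>
        f (?m - 1) y = dN ?m (betaN R N ?m (?h k' y)) \<oplus>\<^bsub>N (?m - 1)\<^esub> betaN R N (?m - 1) (?h (k' - 1) (dM (?m - 1) y))"
      using IH unfolding hstep_def m1 by (simp add: m_def)
    have hz: "?h (k' - 1) \<zero>\<^bsub>M (?m - 2)\<^esub> = (\<lambda>_. \<zero>\<^bsub>R\<^esub>)"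
    proof (cases k')
      case 0
      then show ?thesis by simp
    next
      case (Suc k'')
      have m2: "m - 2 = b + int k''" and m21: "m - 1 = b + int k'' + 1" using Suc by (simp_all add: m_def)
      have "hstep R M dM N dN f (b + int k'') (?h (k'' - 1)) (?h k'')" using less \<open>k = Suc k'\<close> Suc by simp
      then have l: "?h k'' \<in> lin_hom R (M (?m - 2)) (fmod R (carrier (N (?m - 1))))"
        unfolding hstep_def m2 m21 by simp
      have "?h k'' \<zero>\<^bsub>M (?m - 2)\<^esub> = \<zero>\<^bsub>fmod R (carrier (N (?m - 1)))\<^esub>"
        by (rule lin_hom_zero[OF cx_lmod[OF M] lmod_fmod[OF rR] l])
      then show ?thesis using Suc by (simp add: fmod_simps)
    qed
    interpret Nm: lmod R "N ?m" by (rule cx_lmod[OF NC])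
    interpret Nm1: lmod R "N (?m - 1)" by (rule cx_lmod[OF NC])
    define \<gamma> where "\<gamma> x = f ?m x \<ominus>\<^bsub>N ?m\<^esub> betaN R N ?m (?h k' (dM ?m x))" for x
    have glin: "\<gamma> \<in> lin_hom R (M ?m) (N ?m)"
      unfolding \<gamma>_def
      by (rule lin_hom_diff_fun[OF cx_lmod[OF NC] cxm_lin[OF f]
            lin_hom_comp[OF lin_hom_comp[OF cx_d[OF M] hk_lin] beta_lin[OF NC]]])
    have gz: "\<And>x. x \<in> carrier (M ?m) \<Longrightarrow> dN ?m (\<gamma> x) = \<zero>\<^bsub>N (?m - 1)\<^esub>"
    proof -
      fix x assume x: "x \<in> carrier (M ?m)"
      have y: "dM ?m x \<in> carrier (M (?m - 1))" by (rule lin_homD(1)[OF cx_d[OF M] x])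
      have dd: "dM (?m - 1) (dM ?m x) = \<zero>\<^bsub>M (?m - 2)\<^esub>" by (rule cx_dd'[OF M x])
      have e: "f (?m - 1) (dM ?m x) = dN ?m (betaN R N ?m (?h k' (dM ?m x)))"
        using hk_eq[OF y] dd hz beta_zero[OF NC]
          lin_homD(1)[OF cx_d[OF NC] lin_homD(1)[OF beta_lin[OF NC] lin_homD(1)[OF hk_lin y]]]
        by simp
      have c1: "f ?m x \<in> carrier (N ?m)" by (rule lin_homD(1)[OF cxm_lin[OF f] x])
      have c2: "betaN R N ?m (?h k' (dM ?m x)) \<in> carrier (N ?m)"
        by (rule lin_homD(1)[OF beta_lin[OF NC] lin_homD(1)[OF hk_lin y]])
      have "dN ?m (\<gamma> x) = dN ?m (f ?m x) \<ominus>\<^bsub>N (?m - 1)\<^esub> dN ?m (betaN R N ?m (?h k' (dM ?m x)))"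
        unfolding \<gamma>_def by (rule lin_hom_diff[OF cx_lmod[OF NC] cx_lmod[OF NC] cx_d[OF NC] c1 c2])
      also have "dN ?m (f ?m x) = f (?m - 1) (dM ?m x)" by (rule cxm_comm[OF f x])
      finally show "dN ?m (\<gamma> x) = \<zero>\<^bsub>N (?m - 1)\<^esub>"
        using e lin_homD(1)[OF cx_d[OF NC] c2] by (simp add: Nm1.r_neg Nm1.minus_eq)
    qed
    obtain H where Hlin: "H \<in> lin_hom R (M ?m) (fmod R (carrier (N (?m + 1))))"
      and Heq: "\<forall>x\<in>carrier (M ?m). dN (?m + 1) (betaN R N (?m + 1) (H x)) = \<gamma> x"
      using lift_exists[OF N cx_lmod[OF M] fp[rule_format] glin gz] by blast
    have "hstep R M dM N dN f ?m (?h k') H"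
      unfolding hstep_def
    proof (intro conjI ballI)
      show "H \<in> lin_hom R (M ?m) (fmod R (carrier (N (?m + 1))))" by (rule Hlin)
      fix x assume x: "x \<in> carrier (M ?m)"
      have y: "dM ?m x \<in> carrier (M (?m - 1))" by (rule lin_homD(1)[OF cx_d[OF M] x])
      have c1: "f ?m x \<in> carrier (N ?m)" by (rule lin_homD(1)[OF cxm_lin[OF f] x])
      have c2: "betaN R N ?m (?h k' (dM ?m x)) \<in> carrier (N ?m)"
        by (rule lin_homD(1)[OF beta_lin[OF NC] lin_homD(1)[OF hk_lin y]])
      have "dN (?m + 1) (betaN R N (?m + 1) (H x)) \<oplus>\<^bsub>N ?m\<^esub> betaN R N ?m (?h k' (dM ?m x))
          = (f ?m x \<ominus>\<^bsub>N ?m\<^esub> betaN R N ?m (?h k' (dM ?m x))) \<oplus>\<^bsub>N ?m\<^esub> betaN R N ?m (?h k' (dM ?m x))"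
        using Heq x by (simp add: \<gamma>_def)
      also have "\<dots> = f ?m x" using c1 c2 by (simp add: Nm.minus_eq Nm.a_assoc Nm.l_neg)
      finally show "f ?m x = dN (?m + 1) (betaN R N (?m + 1) (H x)) \<oplus>\<^bsub>N ?m\<^esub> betaN R N ?m (?h k' (dM ?m x))"
        by simp
    qed
    then have "hstep R M dM N dN f ?m (?h k') (?h (Suc k'))"
      unfolding hseq.simps(2) mS by (rule someI[of "hstep R M dM N dN f m (hseq R M dM N dN f b k')"])
    then show ?thesis using Suc mS by simp
  qed
qed

theorem corollary2p7:
  fixes R :: "'r ring"
    and M :: "int \<Rightarrow> ('r, 'm) module" and dM :: "int \<Rightarrow> 'm \<Rightarrow> 'm"
    and N :: "int \<Rightarrow> ('r, 'n) module" and dN :: "int \<Rightarrow> 'n \<Rightarrow> 'n"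
  assumes "ring R"
    and "is_complex R M dM"
    and "bounded_below M"
    and "\<forall>n. fin_presented R (M n)"
    and "flat_complex R N dN"
  shows "in_Pr_inv R M dM N dN"
proof -
  note rR = assms(1) and M = assms(2) and N = assms(5) and fp = assms(4)
  have NC: "is_complex R N dN" by (rule flat_cx_complex[OF N])
  obtain b where bnd: "\<forall>n\<le>b. carrier (M n) = {\<zero>\<^bsub>M n\<^esub>}"
    using assms(3) by (auto simp: bounded_below_def)
  show ?thesis
    unfolding in_Pr_inv_def
  proof (intro conjI allI impI)
    show "is_complex R N dN" by (rule NC)
  next
    fix f assume f: "cx_morphism R M dM N dN f"
    define H where "H n = hseq R M dM N dN f b (nat (n - b))" for n
    have inv: "\<And>k. hstep R M dM N dN f (b + int k) (hseq R M dM N dN f b (k - 1)) (hseq R M dM N dN f b k)"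
      by (rule hseq_inv[OF M N fp f bnd])
    have Hlin: "\<And>n. H n \<in> lin_hom R (M n) (fmod R (carrier (N (n + 1))))"
    proof -
      fix n
      show "H n \<in> lin_hom R (M n) (fmod R (carrier (N (n + 1))))"
      proof (cases "b \<le> n")
        case True
        then have e: "b + int (nat (n - b)) = n" by simp
        show ?thesis using inv[of "nat (n - b)"] unfolding hstep_def e H_def by simp
      next
        case False
        then have "nat (n - b) = 0" by simp
        then show ?thesis unfolding H_def using zero_map_lin[OF cx_lmod[OF M] rR] by simp
      qed
    qed
    have Hhom: "\<And>n x. x \<in> carrier (M n) \<Longrightarrow>
        f n x = dN (n + 1) (betaN R N (n + 1) (H n x)) \<oplus>\<^bsub>N n\<^esub> betaN R N n (H (n - 1) (dM n x))"
    proof -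
      fix n x assume x: "x \<in> carrier (M n)"
      show "f n x = dN (n + 1) (betaN R N (n + 1) (H n x)) \<oplus>\<^bsub>N n\<^esub> betaN R N n (H (n - 1) (dM n x))"
      proof (cases "b \<le> n")
        case True
        then have e: "b + int (nat (n - b)) = n" by simp
        have e2: "nat (n - 1 - b) = nat (n - b) - 1" by simp
        show ?thesis using inv[of "nat (n - b)"] x unfolding hstep_def e H_def e2 by simp
      next
        case False
        then have x0: "x = \<zero>\<^bsub>M n\<^esub>" using bnd x by auto
        have k0: "nat (n - b) = 0" "nat (n - 1 - b) = 0" using False by simp_all
        interpret Nn: lmod R "N n" by (rule cx_lmod[OF NC])
        have f0: "f n x = \<zero>\<^bsub>N n\<^esub>" unfolding x0 by (rule lin_hom_zero[OF cx_lmod[OF M] cx_lmod[OF NC] cxm_lin[OF f]])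
        have dN1: "dN (n + 1) \<in> lin_hom R (N (n + 1)) (N n)" using cx_d[OF NC, of "n + 1"] by simp
        have d0: "dN (n + 1) \<zero>\<^bsub>N (n + 1)\<^esub> = \<zero>\<^bsub>N n\<^esub>"
          by (rule lin_hom_zero[OF cx_lmod[OF NC] cx_lmod[OF NC] dN1])
        show ?thesis using f0 d0 beta_zero[OF NC] by (simp add: H_def k0)
      qed
    qed
    show "\<exists>(P :: int \<Rightarrow> ('r, bool \<times> 'n \<Rightarrow> 'r) module) dP g h.
          projective_complex R P dP \<and> cx_morphism R M dM P dP g \<and> cx_morphism R P dP N dN h
          \<and> (\<forall>n. \<forall>x\<in>carrier (M n). h n (g n x) = f n x)"
    proof (intro exI conjI)
      show "projective_complex R (Pc R N) (dPc R)" by (rule Pc_proj[OF rR])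
      show "cx_morphism R M dM (Pc R N) (dPc R) (gPc R dM H)" by (rule gPc_morph[OF M NC Hlin])
      show "cx_morphism R (Pc R N) (dPc R) N dN (hPc R N dN)" by (rule hPc_morph[OF NC])
      show "\<forall>n. \<forall>x\<in>carrier (M n). hPc R N dN n (gPc R dM H n x) = f n x"
        using hg_eq[OF M NC Hlin Hhom] by blast
    qed
  qed
qed

end
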